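(* Let $p$ be an odd prime, $m$ a positive even integer, $s=m/2$, $q=p^m$, $u$ a positive integer and $v=\gcd(m,u)$. Let $\mathrm{Tr}$ denote the trace map from $\mathbb{F}_q$ to $\mathbb{F}_p$. Let \[ D_1=\{(x,y)\in\mathbb{F}_q^2\setminus\{(0,0)\} : \mathrm{Tr}(x+y^{p^u+1})=0\}, \] and $C_{D_1}=\{c(a,b)=(\mathrm{Tr}(ax+by))_{(x,y)\in D_1} : a,b\in\mathbb{F}_q\}$. If $\frac{m}{v}\equiv 2\pmod 4$, then $C_{D_1}$ is a $[p^{2m-1}-1,2m]$ three-weight linear code over $\mathbb{F}_p$ whose weight distribution is: weight $0$ with multiplicity $1$; weight $(p-1)p^{2m-2}$ with multiplicity $p^{2m}-1-(p-1)p^m$; weight $(p-1)p^{2m-2}\left(1+\frac{1}{p^s}\right)$ with multiplicity $(p-1)(p^{m-1}-p^s+p^{s-1})$; and weight $(p-1)p^{2m-2}\left(1-\frac{1}{(p-1)p^s}\right)$ with multiplicity $(p-1)(p^s+1)(p^s-p^{s-1})$.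
   Context: An $[n,k]$ linear code over $\mathbb{F}_p$ is a $k$-dimensional subspace of $\mathbb{F}_p^n$. The multiplicity of a weight $w$ is the number of codewords of Hamming weight $w$; a code is $t$-weight if exactly $t$ nonzero weights occur. *)

theory Defs
  imports Complex_Main "HOL-Computational_Algebra.Primes"
begin

text \<open>Finite field F_q is modelled as a finite field type 'a with CARD('a) = p^m, p prime.
  Trace F_q -> F_p: Tr x = sum_{i<m} x^(p^i) (values lie in the prime subfield).\<close>
definition tr :: "nat \<Rightarrow> nat \<Rightarrow> 'a::field \<Rightarrow> 'a" where
  "tr p m x = (\<Sum>i<m. x ^ (p ^ i))"

definition D1 :: "nat \<Rightarrow> nat \<Rightarrow> nat \<Rightarrow> ('a::{finite,field} \<times> 'a) set" where
  "D1 p m u = {(x, y). (x, y) \<noteq> (0, 0) \<and> tr p m (x + y ^ (p ^ u + 1)) = 0}"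

text \<open>Codeword c(a,b), as a vector indexed by D1 (zero outside D1).\<close>
definition cw :: "nat \<Rightarrow> nat \<Rightarrow> nat \<Rightarrow> 'a::{finite,field} \<Rightarrow> 'a \<Rightarrow> ('a \<times> 'a \<Rightarrow> 'a)" where
  "cw p m u a b = (\<lambda>(x, y). if (x, y) \<in> D1 p m u then tr p m (a * x + b * y) else 0)"

definition code :: "nat \<Rightarrow> nat \<Rightarrow> nat \<Rightarrow> ('a::{finite,field} \<times> 'a \<Rightarrow> 'a) set" where
  "code p m u = {cw p m u a b | a b. True}"

definition hw :: "nat \<Rightarrow> nat \<Rightarrow> nat \<Rightarrow> ('a::{finite,field} \<times> 'a \<Rightarrow> 'a) \<Rightarrow> nat" where
  "hw p m u c = card {d \<in> D1 p m u. c d \<noteq> 0}"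

end

theory Submission
  imports Defs "HOL-Computational_Algebra.Polynomial"
begin

lemma orbit_dvd:
  fixes S :: "'a set" and G :: "'b set" and act :: "'b \<Rightarrow> 'a \<Rightarrow> 'a"
  assumes fS: "finite S" and fG: "finite G"
    and cl: "\<And>x g. x\<in>S \<Longrightarrow> g\<in>G \<Longrightarrow> act g x \<in> S"
    and inj: "\<And>x. x\<in>S \<Longrightarrow> inj_on (\<lambda>g. act g x) G"
    and orb: "\<And>x g. x\<in>S \<Longrightarrow> g\<in>G \<Longrightarrow> (\<lambda>h. act h (act g x)) ` G = (\<lambda>h. act h x) ` G"
    and self: "\<And>x. x\<in>S \<Longrightarrow> x \<in> (\<lambda>h. act h x) ` G"
  shows "card G dvd card S"
proof -
  define Orb where "Orb x = (\<lambda>h. act h x) ` G" for x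
  define C where "C = Orb ` S"
  have U: "\<Union>C = S" using cl self unfolding C_def Orb_def by auto
  have cardO: "\<forall>c\<in>C. card c = card G"
    using inj unfolding C_def Orb_def by (auto simp: card_image)
  have disj: "\<forall>c1\<in>C. \<forall>c2\<in>C. c1 \<noteq> c2 \<longrightarrow> c1 \<inter> c2 = {}"
  proof (intro ballI impI)
    fix c1 c2 assume "c1 \<in> C" "c2 \<in> C" "c1 \<noteq> c2"
    then obtain x y where xy: "x\<in>S" "y\<in>S" "c1 = Orb x" "c2 = Orb y" unfolding C_def by auto
    show "c1 \<inter> c2 = {}"
    proof (rule ccontr)
      assume "c1 \<inter> c2 \<noteq> {}"
      then obtain z where "z \<in> Orb x" "z \<in> Orb y" using xy by auto
      then obtain g g' where g: "g\<in>G" "z = act g x" "g'\<in>G" "z = act g' y" unfolding Orb_def by auto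
      have "Orb z = Orb x" using orb[OF xy(1) g(1)] g(2) unfolding Orb_def by simp
      moreover have "Orb z = Orb y" using orb[OF xy(2) g(3)] g(4) unfolding Orb_def by simp
      ultimately show False using xy \<open>c1 \<noteq> c2\<close> by simp
    qed
  qed
  have "card G * card C = card (\<Union>C)"
  proof (rule card_partition)
    show "finite C" using fS by (simp add: C_def)
    show "finite (\<Union>C)" using U fS by simp
  qed (use cardO disj in auto)
  then show ?thesis using U by (metis dvd_triv_left)
qed

lemma card_pairs:
  fixes P :: "'a::finite \<Rightarrow> 'b::finite \<Rightarrow> bool"
  shows "card {(x, y). P x y} = (\<Sum>y\<in>UNIV. card {x. P x y})"
proof -
  have "{(x, y). P x y} = (\<Union>y\<in>UNIV. {x. P x y} \<times> {y})" by auto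
  then have "card {(x, y). P x y} = (\<Sum>y\<in>UNIV. card ({x. P x y} \<times> {y}))"
    by (simp add: card_UN_disjoint disjoint_iff)
  then show ?thesis by (simp add: card_cartesian_product)
qed

lemma pow_card_same:
  fixes x :: "'a::{finite,field}"
  shows "x ^ card (UNIV :: 'a set) = x"
proof (cases "x = 0")
  case False
  have "x * (\<Prod>y\<in>UNIV-{0}. x * y) = x * x ^ (card (UNIV :: 'a set) - 1) * \<Prod>(UNIV-{0})"
    by (simp add: prod.distrib mult_ac)
  also have "x * x ^ (card (UNIV :: 'a set) - 1) = x ^ Suc (card (UNIV :: 'a set) - 1)"
    by (subst power_Suc) auto
  also have "Suc (card (UNIV :: 'a set) - 1) = card (UNIV :: 'a set)"
    using finite_UNIV_card_ge_0[where ?'a = 'a] by simp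
  also have "(\<Prod>y\<in>UNIV-{0}. x * y) = (\<Prod>y\<in>UNIV-{0}. y)"
    by (rule prod.reindex_bij_witness[of _ "\<lambda>y. y / x" "\<lambda>y. x * y"]) (use False in auto)
  finally show ?thesis
    by simp
qed (use finite_UNIV_card_ge_0[where ?'a = 'a] in auto)

lemma of_nat_mod_char:
  "(of_nat n :: 'a::semiring_1_cancel) = of_nat (n mod CHAR('a))"
proof -
  have "n = CHAR('a) * (n div CHAR('a)) + n mod CHAR('a)" by simp
  then have "(of_nat n :: 'a) = of_nat CHAR('a) * of_nat (n div CHAR('a)) + of_nat (n mod CHAR('a))"
    by (metis of_nat_add of_nat_mult)
  then show ?thesis by simp
qed

lemma char_eq:
  assumes "prime p" "card (UNIV :: 'a::{finite,field} set) = p ^ m"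
  shows "CHAR('a) = p"
proof -
  let ?c = "CHAR('a)"
  have cpos: "?c > 0" by (rule finite_imp_CHAR_pos) simp
  have cp: "prime ?c" using prime_CHAR_semidom[OF cpos] .
  define G where "G = (of_nat ` {..<?c} :: 'a set)"
  have inj: "inj_on (of_nat :: nat \<Rightarrow> 'a) {..<?c}"
  proof (rule inj_onI)
    fix x y assume xy: "x \<in> {..<?c}" "y \<in> {..<?c}" "(of_nat x :: 'a) = of_nat y"
    show "x = y"
    proof (rule ccontr)
      assume "x \<noteq> y"
      then consider "x < y" | "y < x" by linarith
      then show False
      proof cases
        case 1 then have "?c dvd (y - x)" using xy of_nat_eq_iff_char_dvd[of x y] by auto
        then show False using 1 xy by (auto dest: dvd_imp_le)
      next
        case 2 then have "?c dvd (x - y)" using xy of_nat_eq_iff_char_dvd[of y x] by auto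
        then show False using 2 xy by (auto dest: dvd_imp_le)
      qed
    qed
  qed
  have ofn: "(of_nat n :: 'a) \<in> G" for n
  proof -
    have "(of_nat n :: 'a) = of_nat (n mod ?c)"
      by (rule of_nat_mod_char)
    then show ?thesis unfolding G_def using cpos by auto
  qed
  have "card G dvd card (UNIV :: 'a set)"
  proof (rule orbit_dvd[where act = "\<lambda>g x. g + x"])
    fix x :: 'a and g assume "g \<in> G"
    then obtain i where i: "g = of_nat i" unfolding G_def by auto
    show "(\<lambda>h. h + (g + x)) ` G = (\<lambda>h. h + x) ` G"
    proof
      show "(\<lambda>h. h + (g + x)) ` G \<subseteq> (\<lambda>h. h + x) ` G"
      proof
        fix z assume "z \<in> (\<lambda>h. h + (g + x)) ` G"
        then obtain j where "z = of_nat j + (of_nat i + x)" unfolding G_def using i by auto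
        then have "z = of_nat (j + i) + x" by (simp add: add.assoc)
        then show "z \<in> (\<lambda>h. h + x) ` G" using ofn by blast
      qed
      show "(\<lambda>h. h + x) ` G \<subseteq> (\<lambda>h. h + (g + x)) ` G"
      proof
        fix z assume "z \<in> (\<lambda>h. h + x) ` G"
        then obtain j where j: "z = of_nat j + x" unfolding G_def by auto
        have "(of_nat (j + (?c - i mod ?c)) :: 'a) + of_nat i = of_nat j + (of_nat (?c - i mod ?c) + of_nat (i mod ?c))"
          by (metis add.assoc of_nat_add of_nat_mod_char)
        also have "(of_nat (?c - i mod ?c) :: 'a) + of_nat (i mod ?c) = of_nat ?c"
          using cpos by (metis le_add_diff_inverse2 mod_le_divisor of_nat_add)
        finally have "z = of_nat (j + (?c - i mod ?c)) + (of_nat i + x)" using j by (simp add: add.assoc)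
        then show "z \<in> (\<lambda>h. h + (g + x)) ` G" using ofn i by blast
      qed
    qed
  next
    fix x :: 'a show "x \<in> (\<lambda>h. h + x) ` G" using ofn[of 0] by force
  qed (auto simp: inj_on_def)
  moreover have "card G = ?c" unfolding G_def using inj by (simp add: card_image)
  ultimately have "?c dvd p ^ m" using assms by simp
  then have "?c dvd p" using cp prime_dvd_power by blast
  then show ?thesis using cp assms(1) by (simp add: primes_dvd_imp_eq)
qed

locale FF =
  fixes p m :: nat and ty :: "'a::{finite,field} itself"
  assumes pr: "prime p" and cardF: "card (UNIV :: 'a set) = p ^ m" and mpos: "m > 0"
begin

definition Fp :: "'a set" where "Fp = {z. z ^ p = z}"

lemma p_gt1: "p > 1" using pr prime_gt_1_nat by blast

lemma p_pos: "p > 0" using p_gt1 by simp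

lemma chr: "CHAR('a) = p" using char_eq[OF pr cardF] .

lemma of_nat_p [simp]: "(of_nat p :: 'a) = 0" using chr of_nat_CHAR by metis

lemma frob: "((x::'a) + y) ^ (p ^ n) = x ^ (p ^ n) + y ^ (p ^ n)"
  using freshmans_dream'[of "p ^ n" n x y] chr pr by simp

lemma frob_neg: "(- (x::'a)) ^ (p ^ n) = - (x ^ (p ^ n))"
proof -
  have "(x + - x) ^ (p ^ n) = x ^ (p ^ n) + (- x) ^ (p ^ n)" by (rule frob)
  moreover have "p ^ n > 0" using p_gt1 by simp
  moreover have "(0::'a) ^ (p ^ n) = 0" using p_gt1 by simp
  ultimately have "x ^ (p ^ n) + (- x) ^ (p ^ n) = 0" by simp
  then show ?thesis by (simp add: add_eq_0_iff)
qed

lemma frob_diff: "((x::'a) - y) ^ (p ^ n) = x ^ (p ^ n) - y ^ (p ^ n)"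
  using frob[of x "- y" n] frob_neg[of y n] by simp

lemma frob_sum: "(sum (f :: 'b \<Rightarrow> 'a) A) ^ (p ^ n) = (\<Sum>i\<in>A. f i ^ (p ^ n))"
  using p_pos by (induction A rule: infinite_finite_induct) (auto simp: frob)

lemma pow_q: "(x::'a) ^ (p ^ m) = x"
  using pow_card_same[of x] cardF by simp

lemma pow_pow: "(x::'a) ^ (p ^ (a + b)) = (x ^ (p ^ a)) ^ (p ^ b)"
  by (simp add: power_add power_mult)

lemma pow_qk: "(x::'a) ^ (p ^ (m * k)) = x"
proof (induction k)
  case 0 then show ?case by simp
next
  case (Suc k)
  have "x ^ (p ^ (m * Suc k)) = (x ^ (p ^ (m * k))) ^ (p ^ m)"
    by (metis add.commute mult_Suc_right pow_pow)
  then show ?case using Suc pow_q by simp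
qed

lemma of_nat_in_Fp: "(of_nat n :: 'a) \<in> Fp"
proof (induction n)
  case 0 then show ?case using p_gt1 by (simp add: Fp_def)
next
  case (Suc n)
  have "(of_nat n + 1 :: 'a) ^ p = (of_nat n) ^ p + 1"
    using frob[of "of_nat n" 1 1] by simp
  then show ?case using Suc by (simp add: Fp_def add.commute)
qed

lemma Fp_pow: "z \<in> Fp \<Longrightarrow> z ^ (p ^ n) = z"
proof (induction n)
  case 0 then show ?case by simp
next
  case (Suc n)
  have "z ^ (p ^ Suc n) = (z ^ (p ^ n)) ^ p" by (metis power_Suc2 power_mult)
  then show ?case using Suc by (simp add: Fp_def)
qed

lemma Fp_add: "z \<in> Fp \<Longrightarrow> w \<in> Fp \<Longrightarrow> z + w \<in> Fp"
  using frob[of z w 1] by (simp add: Fp_def)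
lemma Fp_neg: "z \<in> Fp \<Longrightarrow> - z \<in> Fp"
  using frob_neg[of z 1] by (simp add: Fp_def)
lemma Fp_diff: "z \<in> Fp \<Longrightarrow> w \<in> Fp \<Longrightarrow> z - w \<in> Fp"
  using frob_diff[of z w 1] by (simp add: Fp_def)
lemma Fp_mult: "z \<in> Fp \<Longrightarrow> w \<in> Fp \<Longrightarrow> z * w \<in> Fp"
  by (simp add: Fp_def power_mult_distrib)
lemma Fp_inv: "z \<in> Fp \<Longrightarrow> inverse z \<in> Fp"
  by (simp add: Fp_def power_inverse)
lemma Fp_div: "z \<in> Fp \<Longrightarrow> w \<in> Fp \<Longrightarrow> z / w \<in> Fp"
  by (simp add: Fp_def power_divide)
lemma Fp_0 [simp]: "0 \<in> Fp" using of_nat_in_Fp[of 0] by simp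
lemma Fp_1 [simp]: "1 \<in> Fp" using of_nat_in_Fp[of 1] by simp

lemma range_of_nat_eq: "range (of_nat :: nat \<Rightarrow> 'a) = of_nat ` {..<p}"
proof -
  have "(of_nat n :: 'a) = of_nat (n mod p)" for n using of_nat_mod_char[where 'a='a, of n] chr by simp
  moreover have "n mod p < p" for n using p_gt1 by simp
  ultimately show ?thesis by force
qed

lemma card_range_of_nat: "card (range (of_nat :: nat \<Rightarrow> 'a)) = p"
proof -
  have inj: "inj_on (of_nat :: nat \<Rightarrow> 'a) {..<p}"
  proof (rule inj_onI)
    fix x y assume xy: "x \<in> {..<p}" "y \<in> {..<p}" "(of_nat x :: 'a) = of_nat y"
    show "x = y"
    proof (rule ccontr)
      assume "x \<noteq> y"
      then consider "x < y" | "y < x" by linarith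
      then show False
      proof cases
        case 1 then have "p dvd (y - x)" using xy of_nat_eq_iff_char_dvd[of x y] chr by auto
        then show False using 1 xy by (auto dest: dvd_imp_le)
      next
        case 2 then have "p dvd (x - y)" using xy of_nat_eq_iff_char_dvd[of y x] chr by auto
        then show False using 2 xy by (auto dest: dvd_imp_le)
      qed
    qed
  qed
  then show ?thesis using range_of_nat_eq by (simp add: card_image)
qed

lemma Fp_eq: "Fp = range (of_nat :: nat \<Rightarrow> 'a)"
proof -
  define P :: "'a poly" where "P = monom 1 p + [:0, -1:]"
  have pP: "poly P x = x ^ p - x" for x by (simp add: P_def poly_monom)
  have degP: "degree P = p" unfolding P_def using p_gt1
    by (subst degree_add_eq_left) (auto simp: degree_monom_eq)
  have "P \<noteq> 0" using degP p_gt1 by auto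
  then have c: "card {x. poly P x = 0} \<le> p" using card_poly_roots_bound degP by metis
  have eq: "{x. poly P x = 0} = Fp" by (auto simp: pP Fp_def)
  have sub: "range (of_nat :: nat \<Rightarrow> 'a) \<subseteq> Fp" using of_nat_in_Fp by auto
  have "card Fp \<le> card (range (of_nat :: nat \<Rightarrow> 'a))" using c eq card_range_of_nat by simp
  then show ?thesis using sub by (metis card_seteq finite)
qed

lemma card_Fp: "card Fp = p" using Fp_eq card_range_of_nat by simp

abbreviation "Tr \<equiv> (tr p m :: 'a \<Rightarrow> 'a)"

lemma tr_add: "Tr (x + y) = Tr x + Tr y"
  by (simp add: tr_def frob sum.distrib)
lemma tr_neg: "Tr (- x) = - Tr x"
  by (simp add: tr_def frob_neg sum_negf)
lemma tr_diff: "Tr (x - y) = Tr x - Tr y"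
  by (simp add: tr_def frob_diff sum_subtractf)
lemma tr_0 [simp]: "Tr 0 = 0"
  using p_gt1 by (simp add: tr_def power_0_left)
lemma tr_scal: "k \<in> Fp \<Longrightarrow> Tr (k * x) = k * Tr x"
  by (simp add: tr_def power_mult_distrib Fp_pow sum_distrib_left)

lemma tr_frob1: "Tr (x ^ p) = Tr x"
proof -
  have "Tr (x ^ p) = (\<Sum>i<m. x ^ (p ^ Suc i))"
    by (simp add: tr_def power_mult[symmetric] mult.commute)
  also have "\<dots> = (\<Sum>i\<in>Suc ` {..<m}. x ^ (p ^ i))"
    by (simp add: sum.reindex)
  also have "Suc ` {..<m} = insert m {1..<m}" 
  proof (rule set_eqI)
    fix i show "i \<in> Suc ` {..<m} \<longleftrightarrow> i \<in> insert m {1..<m}" using mpos by (cases i) auto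
  qed
  also have "(\<Sum>i\<in>insert m {1..<m}. x ^ (p ^ i)) = x ^ (p ^ m) + (\<Sum>i\<in>{1..<m}. x ^ (p ^ i))"
    by simp
  also have "\<dots> = x ^ (p ^ 0) + (\<Sum>i\<in>{1..<m}. x ^ (p ^ i))" using pow_q by simp
  also have "\<dots> = (\<Sum>i\<in>insert 0 {1..<m}. x ^ (p ^ i))" by simp
  also have "insert 0 {1..<m} = {..<m}" using mpos by auto
  finally show ?thesis by (simp add: tr_def)
qed

lemma tr_frob: "Tr (x ^ (p ^ n)) = Tr x"
proof (induction n)
  case 0 then show ?case by simp
next
  case (Suc n)
  have "x ^ (p ^ Suc n) = (x ^ (p ^ n)) ^ p" by (metis power_Suc2 power_mult)
  then show ?case using Suc tr_frob1 by simp
qed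

lemma tr_in_Fp: "Tr x \<in> Fp"
proof -
  have "(Tr x) ^ p = Tr (x ^ p)"
    using frob_sum[of "\<lambda>i. x ^ (p ^ i)" "{..<m}" 1]
    by (simp add: tr_def power_mult[symmetric] mult.commute)
  then show ?thesis using tr_frob1 by (simp add: Fp_def)
qed

lemma tr_nonzero: "\<exists>x. Tr x \<noteq> 0"
proof -
  define P :: "'a poly" where "P = (\<Sum>i<m. monom 1 (p ^ i))"
  have pP: "poly P x = Tr x" for x by (simp add: P_def poly_sum poly_monom tr_def)
  have inj: "p ^ i = p ^ j \<longleftrightarrow> i = j" for i j using p_gt1 by (simp add: power_inject_exp)
  have "coeff P (p ^ (m - 1)) = (\<Sum>i<m. if i = m - 1 then 1 else 0)"
    by (simp add: P_def coeff_sum coeff_monom inj)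
  also have "\<dots> = 1" using mpos by simp
  finally have "coeff P (p ^ (m - 1)) = 1" by simp
  then have P0: "P \<noteq> 0" by auto
  have "degree P \<le> p ^ (m - 1)" unfolding P_def
  proof (rule degree_sum_le)
    fix i assume "i \<in> {..<m}"
    then have "p ^ i \<le> p ^ (m - 1)" using p_gt1 by (intro power_increasing) auto
    then show "degree (monom (1::'a) (p ^ i)) \<le> p ^ (m - 1)" by (simp add: degree_monom_eq)
  qed simp
  then have "card {x. poly P x = 0} \<le> p ^ (m - 1)" using card_poly_roots_bound[OF P0] by linarith
  moreover have "p ^ (m - 1) < p ^ m" using p_gt1 mpos by simp
  ultimately have "card {x. poly P x = 0} < card (UNIV :: 'a set)" using cardF by simp
  then have "{x. poly P x = 0} \<noteq> UNIV" by auto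
  then show ?thesis using pP by auto
qed

end

context FF
begin

lemma fibers_uniform:
  fixes f :: "'a \<Rightarrow> 'a" and H :: "'a set"
  assumes add: "\<And>x y. f (x + y) = f x + f y"
    and scal: "\<And>k x. k \<in> Fp \<Longrightarrow> f (k * x) = k * f x"
    and val: "\<And>x. f x \<in> Fp"
    and H0: "0 \<in> H" and Hadd: "\<And>x y. x \<in> H \<Longrightarrow> y \<in> H \<Longrightarrow> x + y \<in> H"
    and Hneg: "\<And>x. x \<in> H \<Longrightarrow> - x \<in> H"
    and Hscal: "\<And>k x. k \<in> Fp \<Longrightarrow> x \<in> H \<Longrightarrow> k * x \<in> H"
    and hh: "hh \<in> H" "f hh \<noteq> 0" and t: "t \<in> Fp"
  shows "card {x \<in> H. f x = t} * p = card H"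
proof -
  have "f 0 + f 0 = f 0 + 0" using add[of 0 0] by simp
  then have f0: "f 0 = 0" by (simp only: add_left_cancel)
  have fneg: "f (- x) = - f x" for x using add[of x "- x"] f0 by (simp add: add_eq_0_iff)
  have fdiff: "f (x - y) = f x - f y" for x y using add[of x "- y"] fneg[of y] by simp
  define K where "K = {x \<in> H. f x = 0}"
  have fib: "card {x \<in> H. f x = t'} = card K" if t': "t' \<in> Fp" for t'
  proof -
    define a where "a = t' / f hh"
    have aF: "a \<in> Fp" unfolding a_def using t' val Fp_div by blast
    have fa: "f (a * hh) = t'" using scal[OF aF] hh by (simp add: a_def)
    have ah: "a * hh \<in> H" using Hscal[OF aF hh(1)] .
    have "bij_betw (\<lambda>x. x + a * hh) K {x \<in> H. f x = t'}"
    proof (rule bij_betw_byWitness[where f' = "\<lambda>x. x - a * hh"])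
      show "(\<lambda>x. x + a * hh) ` K \<subseteq> {x \<in> H. f x = t'}"
        using ah fa by (auto simp: K_def add Hadd)
      show "(\<lambda>x. x - a * hh) ` {x \<in> H. f x = t'} \<subseteq> K"
        using ah fa Hadd[OF _ Hneg[OF ah]] by (auto simp: K_def fdiff)
    qed auto
    then show ?thesis by (simp add: bij_betw_same_card)
  qed
  have "H = (\<Union>t'\<in>Fp. {x \<in> H. f x = t'})" using val by auto
  then have "card H = card (\<Union>t'\<in>Fp. {x \<in> H. f x = t'})" by (rule arg_cong)
  also have "\<dots> = (\<Sum>t'\<in>Fp. card {x \<in> H. f x = t'})"
    by (rule card_UN_disjoint) auto
  also have "\<dots> = (\<Sum>t'\<in>Fp. card K)" using fib by simp
  also have "\<dots> = p * card K" using card_Fp by simp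
  finally show ?thesis using fib[OF t] by simp
qed

lemma pm_split: "p ^ m = p ^ (m - 1) * p" using mpos by (metis Suc_diff_1 power_Suc2)

lemma tr_fiber: "t \<in> Fp \<Longrightarrow> card {x. Tr x = t} = p ^ (m - 1)"
proof -
  assume t: "t \<in> Fp"
  obtain h0 where h0: "Tr h0 \<noteq> 0" using tr_nonzero by blast
  have "card {x \<in> UNIV. Tr x = t} * p = card (UNIV :: 'a set)"
    by (rule fibers_uniform[where f = Tr and H = UNIV and hh = h0])
       (simp_all only: tr_add tr_scal tr_in_Fp h0 t UNIV_I not_False_eq_True)
  then have "card {x. Tr x = t} * p = p ^ (m - 1) * p"
    using cardF pm_split by simp
  then show ?thesis using p_pos by simp
qed

lemma tr_mul_fiber:
  assumes z: "z \<noteq> 0" and t: "t \<in> Fp"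
  shows "card {x. Tr (z * x) = t} = p ^ (m - 1)"
proof -
  have "bij_betw (\<lambda>x. z * x) {x. Tr (z * x) = t} {x. Tr x = t}"
    by (rule bij_betw_byWitness[where f' = "\<lambda>x. x / z"]) (use z in auto)
  then show ?thesis using tr_fiber[OF t] by (simp add: bij_betw_same_card)
qed

lemma tr_nondeg: "z \<noteq> 0 \<Longrightarrow> \<exists>x. Tr (z * x) \<noteq> 0"
proof -
  assume z: "z \<noteq> 0"
  obtain h0 where "Tr h0 \<noteq> 0" using tr_nonzero by blast
  then have "Tr (z * (h0 / z)) \<noteq> 0" using z by simp
  then show ?thesis by blast
qed

lemma exists_tr1: "\<exists>x0. Tr x0 = 1"
proof -
  have "card {x. Tr x = 1} = p ^ (m - 1)" using tr_fiber by simp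
  moreover have "p ^ (m - 1) > 0" using p_pos by simp
  ultimately have "{x. Tr x = 1} \<noteq> {}" by (metis card.empty less_irrefl)
  then show ?thesis by blast
qed

lemma two_constraint:
  assumes a: "a \<notin> Fp" and t1: "t1 \<in> Fp" and t2: "t2 \<in> Fp" and m2: "m \<ge> 2"
  shows "card {x. Tr x = t1 \<and> Tr (a * x) = t2} = p ^ (m - 2)"
proof -
  obtain x0 where x0: "Tr x0 = 1" using exists_tr1 by blast
  define K where "K = {x. Tr x = 0}"
  have nz: "\<exists>h\<in>K. Tr (a * h) \<noteq> 0"
  proof (rule ccontr)
    assume "\<not> ?thesis"
    then have h: "\<And>h. Tr h = 0 \<Longrightarrow> Tr (a * h) = 0" by (auto simp: K_def)
    define b where "b = Tr (a * x0)"
    have "Tr ((a - b) * x) = 0" for x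
    proof -
      have "Tr (x - Tr x * x0) = 0" using tr_diff tr_scal[OF tr_in_Fp] x0 by simp
      then have "Tr (a * (x - Tr x * x0)) = 0" by (rule h)
      moreover have "Tr (a * (Tr x * x0)) = Tr x * b"
        using tr_scal[OF tr_in_Fp[of x], of "a * x0"] by (simp add: b_def mult.left_commute)
      ultimately have e1: "Tr (a * x) = Tr x * b"
        by (simp add: right_diff_distrib tr_diff)
      have "Tr (b * x) = b * Tr x" using tr_scal[OF tr_in_Fp[of "a * x0"], of x] by (simp add: b_def)
      moreover have "(a - b) * x = a * x - b * x" by (simp add: left_diff_distrib)
      ultimately show ?thesis using e1 by (simp add: tr_diff mult.commute)
    qed
    then have "a - b = 0" using tr_nondeg by blast
    then have "a = b" by simp
    then show False using a tr_in_Fp[of "a * x0"] b_def by simp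
  qed
  then obtain h0 where h0: "h0 \<in> K" "Tr (a * h0) \<noteq> 0" by blast
  define t where "t = t2 - t1 * Tr (a * x0)"
  have tF: "t \<in> Fp" unfolding t_def using t1 t2 tr_in_Fp Fp_diff Fp_mult by blast
  have "card {x \<in> K. Tr (a * x) = t} * p = card K"
  proof (rule fibers_uniform[where f = "\<lambda>x. Tr (a * x)" and hh = h0, OF _ _ _ _ _ _ _ h0 tF])
    show "Tr (a * (x + y)) = Tr (a * x) + Tr (a * y)" for x y by (simp add: distrib_left tr_add)
    show "Tr (a * (k * x)) = k * Tr (a * x)" if "k \<in> Fp" for k x
      using tr_scal[OF that, of "a * x"] by (simp add: mult.left_commute)
    show "Tr (a * x) \<in> Fp" for x by (rule tr_in_Fp)
    show "0 \<in> K" by (simp add: K_def)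
    show "x + y \<in> K" if "x \<in> K" "y \<in> K" for x y using that by (simp add: K_def tr_add)
    show "- x \<in> K" if "x \<in> K" for x using that by (simp add: K_def tr_neg)
    show "k * x \<in> K" if "k \<in> Fp" "x \<in> K" for k x using that by (simp add: K_def tr_scal)
  qed
  moreover have "card K = p ^ (m - 1)" unfolding K_def using tr_fiber by simp
  moreover have "p ^ (m - 1) = p ^ (m - 2) * p"
  proof -
    have "m - 1 = Suc (m - 2)" using m2 by simp
    then show ?thesis by (simp add: power_Suc2)
  qed
  ultimately have cK: "card {x \<in> K. Tr (a * x) = t} = p ^ (m - 2)" using p_gt1 by simp
  have sc: "Tr (a * (t1 * x0)) = t1 * Tr (a * x0)"
    using tr_scal[OF t1, of "a * x0"] by (simp add: mult.left_commute)
  have sc1: "Tr (t1 * x0) = t1" using tr_scal[OF t1, of x0] x0 by simp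
  have "bij_betw (\<lambda>x. x + t1 * x0) {x \<in> K. Tr (a * x) = t} {x. Tr x = t1 \<and> Tr (a * x) = t2}"
  proof (rule bij_betw_byWitness[where f' = "\<lambda>x. x - t1 * x0"])
    show "(\<lambda>x. x + t1 * x0) ` {x \<in> K. Tr (a * x) = t} \<subseteq> {x. Tr x = t1 \<and> Tr (a * x) = t2}"
      using sc sc1 by (auto simp: K_def t_def tr_add distrib_left)
    show "(\<lambda>x. x - t1 * x0) ` {x. Tr x = t1 \<and> Tr (a * x) = t2} \<subseteq> {x \<in> K. Tr (a * x) = t}"
      using sc sc1 by (auto simp: K_def t_def tr_diff right_diff_distrib)
  qed simp_all
  then show ?thesis using cK by (simp add: bij_betw_same_card)
qed

end

lemma nt_struct:
  fixes m u :: nat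
  assumes u: "u > 0" and m: "m > 0" and c: "(m div gcd m u) mod 4 = 2"
  shows "\<exists>k. odd k \<and> m = 2 * gcd m u * k"
    and "\<exists>j. u = gcd m u + 2 * gcd m u * j"
    and "gcd (4 * u) m dvd 2 * u"
proof -
  obtain v where hv: "gcd m u = v" by blast
  have v0: "v > 0" using m hv by auto
  obtain m' u' where mu: "m = m' * v" "u = u' * v" "coprime m' u'"
    using gcd_coprime_exists[of m u] v0 hv by auto
  have md: "m div v = m'" using mu(1) v0 by simp
  have m'4: "m' mod 4 = 2" using c md hv by simp
  define k where "k = m' div 2"
  have m'k: "m' = 2 * k" using m'4 unfolding k_def by presburger
  have kodd: "odd k" using m'4 unfolding k_def by presburger
  have mk: "m = 2 * v * k" using mu(1) m'k by simp
  show "\<exists>k. odd k \<and> m = 2 * gcd m u * k"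
    using kodd mk hv by auto
  have u'odd: "odd u'"
  proof
    assume "even u'"
    then have "2 dvd gcd m' u'" using m'k by simp
    moreover have "gcd m' u' = 1" using mu(3) by (simp add: coprime_iff_gcd_eq_1)
    ultimately show False by simp
  qed
  then obtain j where j: "u' = 2 * j + 1" using oddE by blast
  have uj: "u = v + 2 * v * j" using mu(2) j by (simp add: algebra_simps)
  show "\<exists>j. u = gcd m u + 2 * gcd m u * j" using uj hv by auto
  have ck2: "coprime k 2" using kodd by simp
  have cku: "coprime k u'" using mu(3) m'k by simp
  have "coprime k (2 * u')" using ck2 cku by simp
  then have g1: "gcd (2 * u') k = 1" by (simp add: coprime_iff_gcd_eq_1 gcd.commute)
  have e1: "4 * u = (2 * v) * (2 * u')" using mu(2) by simp
  have e2: "m = (2 * v) * k" using mk by simp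
  have "gcd (4 * u) m = gcd ((2 * v) * (2 * u')) ((2 * v) * k)" using e1 e2 by simp
  also have "\<dots> = (2 * v) * gcd (2 * u') k" by (rule gcd_mult_distrib_nat[symmetric])
  also have "\<dots> = 2 * v" using g1 by simp
  finally have "gcd (4 * u) m = 2 * v" .
  moreover have "2 * v dvd 2 * u" using mu(2) by simp
  ultimately show "gcd (4 * u) m dvd 2 * u" by simp
qed

lemma int_pow_dvd:
  fixes x :: int
  shows "x - y dvd x ^ n - y ^ n"
  using power_diff_sumr2[of x n y] by (metis dvd_triv_left)

lemma nat_pow_minus1_dvd:
  fixes x :: nat assumes "x \<ge> 1"
  shows "x ^ a - 1 dvd x ^ (a * c) - 1"
proof -
  have "int (x ^ a) - 1 dvd int (x ^ a) ^ c - 1 ^ c" by (rule int_pow_dvd)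
  moreover have "x ^ a \<ge> 1" "x ^ (a * c) \<ge> 1" using assms by simp_all
  ultimately have "int (x ^ a - 1) dvd int (x ^ (a * c) - 1)"
    by (simp add: of_nat_diff power_mult)
  then show ?thesis by (simp only: of_nat_dvd_iff)
qed

lemma nat_odd_pow_plus1_dvd:
  fixes x :: nat assumes "odd k"
  shows "x + 1 dvd x ^ k + 1"
proof -
  have "int x - (-1) dvd int x ^ k - (-1) ^ k" by (rule int_pow_dvd)
  then have "int x + 1 dvd int x ^ k + 1" using assms by simp
  then have "int (x + 1) dvd int (x ^ k + 1)" by (simp add: add.commute)
  then show ?thesis by (simp only: of_nat_dvd_iff)
qed

context FF
begin

lemma fix_mult: "(x::'a) ^ (p ^ a) = x \<Longrightarrow> x ^ (p ^ (a * k)) = x"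
proof (induction k)
  case 0 then show ?case by simp
next
  case (Suc k)
  have "x ^ (p ^ (a * Suc k)) = (x ^ (p ^ (a * k))) ^ (p ^ a)"
    by (metis add.commute mult_Suc_right pow_pow)
  then show ?case using Suc by simp
qed

lemma fix_sub: "(x::'a) ^ (p ^ (a + b)) = x \<Longrightarrow> x ^ (p ^ a) = x \<Longrightarrow> x ^ (p ^ b) = x"
  by (metis pow_pow)

lemma fix_gcd:
  assumes "a \<noteq> 0" "(x::'a) ^ (p ^ a) = x" "x ^ (p ^ b) = x"
  shows "x ^ (p ^ (gcd a b)) = x"
proof -
  obtain X Y where XY: "a * X = b * Y + gcd a b" using bezout_nat[OF assms(1)] by blast
  have "x ^ (p ^ (a * X)) = x" using fix_mult assms(2) by blast
  then have "x ^ (p ^ (b * Y + gcd a b)) = x" using XY by simp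
  moreover have "x ^ (p ^ (b * Y)) = x" using fix_mult assms(3) by blast
  ultimately show ?thesis by (rule fix_sub)
qed

lemma roots_le:
  assumes "n > 0"
  shows "card {x::'a. x ^ n = z} \<le> n"
proof -
  define P :: "'a poly" where "P = monom 1 n + [:- z:]"
  have pP: "poly P x = x ^ n - z" for x by (simp add: P_def poly_monom)
  have degP: "degree P = n" unfolding P_def using assms
    by (subst degree_add_eq_left) (auto simp: degree_monom_eq)
  have "P \<noteq> 0" using degP assms by auto
  then have "card {x. poly P x = 0} \<le> n" using card_poly_roots_bound degP by metis
  moreover have "{x. poly P x = 0} = {x. x ^ n = z}" by (auto simp: pP)
  ultimately show ?thesis by simp
qed

lemma q_gt1: "p ^ m > 1" using p_gt1 mpos by (metis one_less_power)

lemma nonzero_pow: "(x::'a) \<noteq> 0 \<Longrightarrow> x ^ (p ^ m - 1) = 1"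
proof -
  assume x: "x \<noteq> 0"
  have "x * x ^ (p ^ m - 1) = x ^ Suc (p ^ m - 1)" by simp
  also have "Suc (p ^ m - 1) = p ^ m" using q_gt1 by simp
  finally have "x * x ^ (p ^ m - 1) = x * 1" using pow_q by simp
  then show ?thesis using x by (metis mult_left_cancel)
qed

lemma roots_count:
  assumes n: "n > 0" and d: "n dvd p ^ m - 1"
  shows "card {x::'a. x ^ n = 1} = n"
proof -
  define q1 where "q1 = p ^ m - 1"
  define k where "k = q1 div n"
  have q1pos: "q1 > 0" using q_gt1 by (simp add: q1_def)
  have q1nk: "q1 = n * k" using d by (simp add: k_def q1_def)
  then have kpos: "k > 0" using q1pos by (cases k) auto
  define h :: "'a poly" where "h = (\<Sum>j<k. monom 1 (n * j))"
  have ph: "poly h x = (\<Sum>j<k. (x ^ n) ^ j)" for x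
    by (simp add: h_def poly_sum poly_monom power_mult)
  have "coeff h 0 = (\<Sum>j<k. if j = 0 then 1 else 0)"
    using n by (simp add: h_def coeff_sum coeff_monom)
  also have "\<dots> = 1" using kpos by simp
  finally have h0: "h \<noteq> 0" by auto
  have degh: "degree h \<le> n * (k - 1)" unfolding h_def
  proof (rule degree_sum_le)
    fix j assume "j \<in> {..<k}"
    then have "j \<le> k - 1" by simp
    then have "n * j \<le> n * (k - 1)" by (rule mult_le_mono2)
    then show "degree (monom (1::'a) (n * j)) \<le> n * (k - 1)" by (simp add: degree_monom_eq)
  qed simp
  define S2 where "S2 = {x::'a. x \<noteq> 0 \<and> x ^ n \<noteq> 1}"
  have "S2 \<subseteq> {x. poly h x = 0}"
  proof
    fix x assume "x \<in> S2"
    then have x: "x \<noteq> 0" "x ^ n \<noteq> 1" by (auto simp: S2_def)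
    have "(x ^ n) ^ k = 1" using nonzero_pow[OF x(1)] q1nk by (simp add: q1_def power_mult)
    then show "x \<in> {x. poly h x = 0}" using x by (simp add: ph sum_gp_strict)
  qed
  then have "card S2 \<le> card {x. poly h x = 0}" by (simp add: card_mono)
  also have "\<dots> \<le> n * (k - 1)" using card_poly_roots_bound[OF h0] degh by linarith
  finally have cS2: "card S2 \<le> n * (k - 1)" .
  have U: "UNIV - {0} = {x::'a. x ^ n = 1} \<union> S2" using n by (auto simp: S2_def power_0_left)
  have "card (UNIV - {0::'a}) = q1" using cardF by (simp add: q1_def)
  moreover have "card ({x::'a. x ^ n = 1} \<union> S2) = card {x::'a. x ^ n = 1} + card S2"
    by (rule card_Un_disjoint) (auto simp: S2_def)
  ultimately have "card {x::'a. x ^ n = 1} + card S2 = q1" using U by simp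
  moreover have "n * k = n * (k - 1) + n" using kpos by (cases k) auto
  ultimately have "card {x::'a. x ^ n = 1} \<ge> n" using cS2 q1nk by linarith
  moreover have "card {x::'a. x ^ n = 1} \<le> n" by (rule roots_le[OF n])
  ultimately show ?thesis by simp
qed

end

locale FF2 = FF p m ty for p m and ty :: "'a::{finite,field} itself" +
  fixes u :: nat
  assumes upos: "u > 0" and meven: "even m" and podd: "odd p"
    and cnd: "(m div gcd m u) mod 4 = 2"
begin

definition "v = gcd m u"
definition "s = m div 2"

lemma vpos: "v > 0" using mpos by (simp add: v_def)

lemma m_vk: "\<exists>k. odd k \<and> m = 2 * v * k"
  using nt_struct(1)[OF upos mpos cnd] by (simp add: v_def)

lemma u_vj: "\<exists>j. u = v + 2 * v * j"
  using nt_struct(2)[OF upos mpos cnd] by (simp add: v_def)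

lemma gcd4u: "gcd (4 * u) m dvd 2 * u"
  using nt_struct(3)[OF upos mpos cnd] .

lemma m_2s: "m = 2 * s" using meven by (simp add: s_def)

lemma s_vk: "\<exists>k. odd k \<and> s = v * k"
  using m_vk m_2s by auto

lemma spos: "s > 0" using m_2s mpos by simp

lemma p_ge3: "p \<ge> 3"
  using p_gt1 podd by presburger

lemma two_ne0: "(2::'a) \<noteq> 0"
proof
  assume "(2::'a) = 0"
  then have "(of_nat 2 :: 'a) = 0" by simp
  then have "p dvd 2" using of_nat_eq_0_iff_char_dvd chr by metis
  then show False using p_ge3 by (auto dest: dvd_imp_le)
qed

definition sig :: "'a \<Rightarrow> 'a" where "sig y = y ^ (p ^ u)"
definition tau :: "'a \<Rightarrow> 'a" where "tau y = y ^ (p ^ ((m - 1) * u))"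

lemma sig_tau: "sig (tau y) = y"
proof -
  have "sig (tau y) = y ^ (p ^ ((m - 1) * u + u))" by (simp add: sig_def tau_def pow_pow)
  also have "(m - 1) * u + u = m * u" using mpos by (cases m) auto
  finally show ?thesis using pow_qk by simp
qed

lemma sig_add: "sig (x + y) = sig x + sig y" by (simp add: sig_def frob)
lemma sig_mult: "sig (x * y) = sig x * sig y" by (simp add: sig_def power_mult_distrib)
lemma sig_neg: "sig (- x) = - sig x" by (simp add: sig_def frob_neg)
lemma sig_Fp: "c \<in> Fp \<Longrightarrow> sig c = c" by (simp add: sig_def Fp_pow)
lemma tau_add: "tau (x + y) = tau x + tau y" by (simp add: tau_def frob)
lemma tr_sig: "Tr (sig x) = Tr x" by (simp add: sig_def tr_frob)

definition Qf :: "'a \<Rightarrow> 'a \<Rightarrow> 'a" where "Qf c y = Tr (c * y ^ (p ^ u + 1))"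
definition Lf :: "'a \<Rightarrow> 'a \<Rightarrow> 'a" where "Lf c w = c * (sig w + tau w)"

lemma pow_e: "y ^ (p ^ u + 1) = y * sig y" by (simp add: sig_def)

lemma Q_add:
  assumes c: "c \<in> Fp"
  shows "Qf c (y + w) = Qf c y + Qf c w + Tr (y * Lf c w)"
proof -
  have e0: "(y + w) ^ (p ^ u + 1) = (y + w) * (sig y + sig w)" by (simp only: pow_e sig_add)
  have e1: "c * ((y + w) * (sig y + sig w)) = c * (y * sig y) + c * (w * sig w) + (c * y * sig w + c * w * sig y)"
    by algebra
  have "sig (c * tau w * y) = c * w * sig y" by (simp add: sig_mult sig_Fp[OF c] sig_tau)
  then have e2: "Tr (c * w * sig y) = Tr (c * tau w * y)" by (metis tr_sig)
  have e3: "y * Lf c w = c * y * sig w + c * tau w * y" unfolding Lf_def by algebra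
  have "Qf c (y + w) = Tr (c * (y * sig y)) + Tr (c * (w * sig w)) + (Tr (c * y * sig w) + Tr (c * w * sig y))"
    unfolding Qf_def e0 e1 by (simp only: tr_add)
  moreover have "Qf c y = Tr (c * (y * sig y))" by (simp only: Qf_def pow_e)
  moreover have "Qf c w = Tr (c * (w * sig w))" by (simp only: Qf_def pow_e)
  moreover have "Tr (y * Lf c w) = Tr (c * y * sig w) + Tr (c * tau w * y)" unfolding e3 by (rule tr_add)
  ultimately show ?thesis using e2 by simp
qed

lemma Q_0 [simp]: "Qf c 0 = 0" by (simp add: Qf_def)

lemma Q_in_Fp: "Qf c y \<in> Fp" by (simp add: Qf_def tr_in_Fp)

lemma Q_neg: "Qf c (- y) = Qf c y"
proof -
  have "odd (p ^ u)" using podd by simp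
  then have "even (p ^ u + 1)" by simp
  then show ?thesis by (simp add: Qf_def)
qed

lemma L_add: "Lf c (x + y) = Lf c x + Lf c y"
  by (simp add: Lf_def sig_add tau_add algebra_simps)

lemma L_0: "Lf c 0 = 0"
  using p_pos by (simp add: Lf_def sig_def tau_def power_0_left)

lemma L_diff: "Lf c (x - y) = Lf c x - Lf c y"
  using L_add[of c "x - y" y] by (simp add: algebra_simps)

lemma fix2v: "(x::'a) ^ (p ^ (2 * v)) = x \<Longrightarrow> x ^ (p ^ u) = x ^ (p ^ v)"
proof -
  assume x: "x ^ (p ^ (2 * v)) = x"
  obtain j where j: "u = v + 2 * v * j" using u_vj by blast
  have "x ^ (p ^ u) = (x ^ (p ^ (2 * v * j))) ^ (p ^ v)"
    using j pow_pow[of x "2 * v * j" v] by (simp add: add.commute)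
  also have "x ^ (p ^ (2 * v * j)) = x" using fix_mult[OF x] by simp
  finally show ?thesis .
qed

lemma L_inj0:
  assumes c: "c \<in> Fp" "c \<noteq> 0" and w: "Lf c w = 0"
  shows "w = 0"
proof -
  have "sig w + tau w = 0" using w c by (simp add: Lf_def)
  then have "sig w = - tau w" by (simp add: eq_neg_iff_add_eq_0)
  then have "sig (sig w) = - w" by (simp add: sig_neg sig_tau)
  moreover have "sig (sig w) = w ^ (p ^ (u + u))" by (simp only: sig_def pow_pow)
  ultimately have w2: "w ^ (p ^ (2 * u)) = - w" by (simp only: mult_2)
  have "w ^ (p ^ (2 * u + 2 * u)) = (w ^ (p ^ (2 * u))) ^ (p ^ (2 * u))" by (rule pow_pow)
  also have "\<dots> = w" using w2 by (simp add: frob_neg)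
  finally have w4: "w ^ (p ^ (4 * u)) = w" by simp
  have g: "w ^ (p ^ gcd (4 * u) m) = w" using fix_gcd[OF _ w4 pow_q] upos by simp
  obtain t where t: "2 * u = gcd (4 * u) m * t" using gcd4u by (auto simp: dvd_def)
  have "w ^ (p ^ (gcd (4 * u) m * t)) = w" by (rule fix_mult[OF g])
  then have h: "w ^ (p ^ (2 * u)) = w" by (simp only: t)
  have "- w = w ^ (p ^ (2 * u))" using w2 by (rule sym)
  also note h
  finally have nw: "- w = w" .
  have ww: "w + w = 0"
  proof -
    have "w + w = w + - w" by (simp only: nw)
    also have "\<dots> = 0" by simp
    finally show ?thesis .
  qed
  then have "2 * w = 0" by (simp only: mult_2)
  then show ?thesis using two_ne0 by simp
qed

lemma L_inj: "c \<in> Fp \<Longrightarrow> c \<noteq> 0 \<Longrightarrow> inj (Lf c)"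
proof (rule injI)
  fix x y assume c: "c \<in> Fp" "c \<noteq> 0" and "Lf c x = Lf c y"
  then have "Lf c (x - y) = 0" by (simp add: L_diff)
  then have "x - y = 0" using L_inj0[OF c] by blast
  then show "x = y" by simp
qed

lemma L_bij: "c \<in> Fp \<Longrightarrow> c \<noteq> 0 \<Longrightarrow> bij (Lf c)"
  using L_inj finite_UNIV_inj_surj[of "Lf c"] by (simp add: bij_def)

end

context FF2
begin

definition NQ :: "'a \<Rightarrow> 'a \<Rightarrow> nat" where "NQ c t = card {y. Qf c y = t}"

lemma sum_over_Fp:
  fixes g :: "'a \<Rightarrow> nat" and F :: "'a \<Rightarrow> 'a"
  assumes "\<And>y. F y \<in> Fp"
  shows "(\<Sum>y\<in>UNIV. g (F y)) = (\<Sum>t\<in>Fp. card {y. F y = t} * g t)"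
proof -
  have "(\<Sum>y\<in>UNIV. g (F y)) = (\<Sum>t\<in>Fp. \<Sum>y\<in>{y \<in> UNIV. F y = t}. g (F y))"
    by (rule sum.group[symmetric]) (use assms in auto)
  also have "\<dots> = (\<Sum>t\<in>Fp. \<Sum>y\<in>{y. F y = t}. g t)"
    by (intro sum.cong) auto
  also have "\<dots> = (\<Sum>t\<in>Fp. card {y. F y = t} * g t)" by simp
  finally show ?thesis .
qed

lemma sum_NQ: "(\<Sum>t\<in>Fp. NQ c t) = p ^ m"
proof -
  have "(\<Sum>y\<in>(UNIV::'a set). (\<lambda>_. 1::nat) (Qf c y)) = (\<Sum>t\<in>Fp. card {y. Qf c y = t} * 1)"
    by (rule sum_over_Fp) (rule Q_in_Fp)
  then show ?thesis using cardF by (simp add: NQ_def)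
qed

lemma sumsq_NQ:
  assumes c: "c \<in> Fp" "c \<noteq> 0"
  shows "(\<Sum>t\<in>Fp. NQ c t * NQ c t) = p ^ m + (p ^ m - 1) * p ^ (m - 1)"
proof -
  have "(\<Sum>t\<in>Fp. NQ c t * NQ c t) = (\<Sum>z\<in>UNIV. NQ c (Qf c z))"
    using sum_over_Fp[of "Qf c" "NQ c"] Q_in_Fp by (simp add: NQ_def)
  also have "\<dots> = card {(y, z). Qf c y = Qf c z}"
    by (simp add: card_pairs NQ_def)
  also have "\<dots> = card {(y, w). Qf c (y + w) = Qf c y}"
  proof (rule bij_betw_same_card)
    show "bij_betw (\<lambda>(y, z). (y, z - y)) {(y, z). Qf c y = Qf c z} {(y, w). Qf c (y + w) = Qf c y}"
      by (rule bij_betw_byWitness[where f' = "\<lambda>(y, w). (y, y + w)"]) auto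
  qed
  also have "\<dots> = (\<Sum>w\<in>UNIV. card {y. Qf c (y + w) = Qf c y})" by (rule card_pairs)
  also have "\<dots> = (\<Sum>w\<in>(UNIV::'a set). if w = 0 then p ^ m else p ^ (m - 1))"
  proof (rule sum.cong)
    fix w :: 'a
    have eq: "{y. Qf c (y + w) = Qf c y} = {y. Tr (Lf c w * y) = - Qf c w}"
      using Q_add[OF c(1)] by (auto simp: mult.commute add.assoc eq_neg_iff_add_eq_0 add.commute)
    show "card {y. Qf c (y + w) = Qf c y} = (if w = 0 then p ^ m else p ^ (m - 1))"
    proof (cases "w = 0")
      case True then show ?thesis using cardF by simp
    next
      case False
      then have "Lf c w \<noteq> 0" using L_inj0[OF c] by blast
      then have "card {y. Tr (Lf c w * y) = - Qf c w} = p ^ (m - 1)"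
        using tr_mul_fiber Fp_neg[OF Q_in_Fp] by blast
      then show ?thesis using eq False by simp
    qed
  qed simp
  also have "\<dots> = p ^ m + (\<Sum>w\<in>UNIV - {0::'a}. if w = 0 then p ^ m else p ^ (m - 1))"
    by (subst sum.remove[of UNIV 0]) auto
  also have "(\<Sum>w\<in>UNIV - {0::'a}. if w = 0 then p ^ m else p ^ (m - 1)) = (\<Sum>w\<in>UNIV - {0::'a}. p ^ (m - 1))"
    by (rule sum.cong) auto
  also have "\<dots> = (p ^ m - 1) * p ^ (m - 1)" using cardF by simp
  finally show ?thesis .
qed

lemma pv_ge: "p ^ v \<ge> 3"
proof -
  have "p ^ v \<ge> p ^ 1" using vpos p_gt1 by (intro power_increasing) auto
  then show ?thesis using p_ge3 by simp
qed

lemma dvd_2v_m: "p ^ (2 * v) - 1 dvd p ^ m - 1"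
proof -
  obtain k where k: "m = 2 * v * k" using m_vk by blast
  show ?thesis using nat_pow_minus1_dvd[of p "2 * v" k] p_gt1 k by simp
qed

lemma sq_split: "p ^ (2 * v) - 1 = (p ^ v - 1) * (p ^ v + 1)"
proof -
  have "p ^ (2 * v) = p ^ v * p ^ v" by (simp add: mult_2 power_add)
  moreover have "p ^ v \<ge> 1" using p_pos by simp
  ultimately show ?thesis by (simp add: algebra_simps)
qed

lemma fix2v_of_root:
  assumes "(x::'a) ^ (p ^ (2 * v) - 1) = 1"
  shows "x ^ (p ^ (2 * v)) = x"
proof -
  have "p ^ (2 * v) = Suc (p ^ (2 * v) - 1)" using p_pos by simp
  then have "x ^ (p ^ (2 * v)) = x * x ^ (p ^ (2 * v) - 1)" by (metis power_Suc)
  then show ?thesis using assms by simp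
qed

lemma surj_e:
  assumes t: "t \<in> Fp" "t \<noteq> 0"
  shows "\<exists>\<mu>::'a. \<mu> ^ (p ^ u + 1) = t"
proof -
  define A where "A = {x::'a. x ^ (p ^ (2 * v) - 1) = 1}"
  define B where "B = {x::'a. x ^ (p ^ v - 1) = 1}"
  define f where "f x = x ^ (p ^ v + 1)" for x :: 'a
  have pv1: "p ^ v - 1 > 0" using pv_ge by simp
  have cA: "card A = p ^ (2 * v) - 1" unfolding A_def
  proof (rule roots_count)
    show "p ^ (2 * v) - 1 > 0" using sq_split pv1 by simp
  qed (rule dvd_2v_m)
  have cB: "card B \<le> p ^ v - 1" unfolding B_def by (rule roots_le[OF pv1])
  have fAB: "f ` A \<subseteq> B"
  proof
    fix z assume "z \<in> f ` A"
    then obtain x where x: "x \<in> A" "z = f x" by blast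
    have "z ^ (p ^ v - 1) = x ^ ((p ^ v + 1) * (p ^ v - 1))" using x(2) unfolding f_def by (simp only: power_mult)
    also have "(p ^ v + 1) * (p ^ v - 1) = p ^ (2 * v) - 1" using sq_split by simp
    finally show "z \<in> B" using x by (simp add: A_def B_def)
  qed
  have "A \<subseteq> (\<Union>z\<in>f ` A. {x. x ^ (p ^ v + 1) = z})" by (auto simp: f_def)
  then have "card A \<le> card (\<Union>z\<in>f ` A. {x::'a. x ^ (p ^ v + 1) = z})" by (intro card_mono) auto
  also have "\<dots> \<le> (\<Sum>z\<in>f ` A. card {x::'a. x ^ (p ^ v + 1) = z})" by (rule card_UN_le) simp
  also have "\<dots> \<le> (\<Sum>z\<in>f ` A. p ^ v + 1)" by (intro sum_mono roots_le) simp
  also have "\<dots> = card (f ` A) * (p ^ v + 1)" by simp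
  finally have "(p ^ v - 1) * (p ^ v + 1) \<le> card (f ` A) * (p ^ v + 1)" using cA sq_split by simp
  then have "p ^ v - 1 \<le> card (f ` A)" by (rule mult_right_le_imp_le) simp
  then have "card B \<le> card (f ` A)" using cB by simp
  then have fAB': "f ` A = B" using fAB by (metis card_seteq finite)
  have tp: "t ^ (p - 1) = 1"
  proof -
    have "t ^ p = t" using t(1) by (simp add: Fp_def)
    moreover have "p = Suc (p - 1)" using p_pos by simp
    ultimately have "t * t ^ (p - 1) = t * 1" by (metis power_Suc mult_1_right)
    then show ?thesis using t(2) by (metis mult_left_cancel)
  qed
  have "p ^ 1 - 1 dvd p ^ (1 * v) - 1" using nat_pow_minus1_dvd[of p 1 v] p_pos by simp
  then obtain r where r: "p ^ v - 1 = (p - 1) * r" by (auto simp: dvd_def)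
  have "t ^ (p ^ v - 1) = 1" using tp r by (simp add: power_mult)
  then have "t \<in> f ` A" using fAB' by (simp add: B_def)
  then obtain \<mu> where mu: "\<mu> \<in> A" "\<mu> ^ (p ^ v + 1) = t" by (auto simp: f_def)
  have "\<mu> ^ (p ^ (2 * v)) = \<mu>" using mu(1) fix2v_of_root by (simp add: A_def)
  then have "\<mu> ^ (p ^ u) = \<mu> ^ (p ^ v)" by (rule fix2v)
  then have "\<mu> ^ (p ^ u + 1) = t" using mu(2) by simp
  then show ?thesis by blast
qed

lemma NQ_scale:
  assumes c: "c \<in> Fp" and t: "t \<in> Fp" "t \<noteq> 0"
  shows "NQ c t = NQ c 1"
proof -
  obtain \<mu> :: 'a where mu: "\<mu> ^ (p ^ u + 1) = t" using surj_e[OF t] by blast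
  have mu0: "\<mu> \<noteq> 0" using mu t(2) p_pos by (auto simp: power_0_left)
  have Qs: "Qf c (\<mu> * y) = t * Qf c y" for y
  proof -
    have "(\<mu> * y) ^ (p ^ u + 1) = t * y ^ (p ^ u + 1)" by (simp only: power_mult_distrib mu)
    then have "c * (\<mu> * y) ^ (p ^ u + 1) = t * (c * y ^ (p ^ u + 1))" by (simp only: mult.left_commute)
    then have "Tr (c * (\<mu> * y) ^ (p ^ u + 1)) = Tr (t * (c * y ^ (p ^ u + 1)))" by (simp only:)
    also have "\<dots> = t * Tr (c * y ^ (p ^ u + 1))" by (rule tr_scal[OF t(1)])
    finally show ?thesis by (simp only: Qf_def)
  qed
  have "bij_betw (\<lambda>y. \<mu> * y) {y. Qf c y = 1} {y. Qf c y = t}"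
  proof (rule bij_betw_byWitness[where f' = "\<lambda>y. y / \<mu>"])
    show "\<forall>a\<in>{y. Qf c y = 1}. \<mu> * a / \<mu> = a" using mu0 by simp
    show "\<forall>a\<in>{y. Qf c y = t}. \<mu> * (a / \<mu>) = a" using mu0 by simp
    show "(\<lambda>y. \<mu> * y) ` {y. Qf c y = 1} \<subseteq> {y. Qf c y = t}" using Qs by auto
    show "(\<lambda>y. y / \<mu>) ` {y. Qf c y = t} \<subseteq> {y. Qf c y = 1}"
    proof (rule image_subsetI)
      fix y assume "y \<in> {y. Qf c y = t}"
      then have "Qf c y = t" by simp
      moreover have "Qf c (\<mu> * (y / \<mu>)) = t * Qf c (y / \<mu>)" by (rule Qs)
      ultimately show "y / \<mu> \<in> {y. Qf c y = 1}" using mu0 t(2) by simp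
    qed
  qed
  then show ?thesis by (simp add: NQ_def bij_betw_same_card)
qed

end

lemma pow_mod_order:
  fixes l :: "'a::field"
  assumes "l ^ d = 1"
  shows "l ^ n = l ^ (n mod d)"
proof -
  have "l ^ n = l ^ (d * (n div d) + n mod d)" by simp
  also have "\<dots> = (l ^ d) ^ (n div d) * l ^ (n mod d)" by (simp only: power_add power_mult)
  finally show ?thesis using assms by simp
qed

context FF2
begin

lemma exists_lam: "\<exists>l::'a. l ^ (p ^ v + 1) = 1 \<and> l ^ 2 \<noteq> 1"
proof -
  have "p ^ v + 1 dvd p ^ (2 * v) - 1" by (simp only: sq_split dvd_triv_right)
  then have dv: "p ^ v + 1 dvd p ^ m - 1" using dvd_2v_m dvd_trans by blast
  have c1: "card {x::'a. x ^ (p ^ v + 1) = 1} = p ^ v + 1" by (rule roots_count) (use dv in auto)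
  have c2: "card {x::'a. x ^ 2 = 1} \<le> 2" by (rule roots_le) simp
  have "\<not> {x::'a. x ^ (p ^ v + 1) = 1} \<subseteq> {x::'a. x ^ 2 = 1}"
  proof
    assume "{x::'a. x ^ (p ^ v + 1) = 1} \<subseteq> {x::'a. x ^ 2 = 1}"
    then have "card {x::'a. x ^ (p ^ v + 1) = 1} \<le> card {x::'a. x ^ 2 = 1}" by (intro card_mono) auto
    then show False using c1 c2 pv_ge by simp
  qed
  then show ?thesis by auto
qed

lemma lam_e:
  assumes l: "(l::'a) ^ (p ^ v + 1) = 1"
  shows "l ^ (p ^ u + 1) = 1"
proof -
  have l0: "l \<noteq> 0" using l p_pos by (auto simp: power_0_left)
  have "l ^ (p ^ v) * l = 1" using l by (simp add: power_Suc2[symmetric])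
  then have li: "l ^ (p ^ v) = inverse l" using l0 by (simp add: field_simps)
  have "l ^ (p ^ (2 * v)) = (l ^ (p ^ v)) ^ (p ^ v)" by (simp only: mult_2 pow_pow)
  also have "\<dots> = l" using li by (simp add: power_inverse)
  finally have "l ^ (p ^ u) = l ^ (p ^ v)" by (rule fix2v)
  then show ?thesis using l by simp
qed

lemma NQ1_not_minus:
  assumes c: "c \<in> Fp" "c \<noteq> 0"
  shows "NQ c 1 + p ^ (s - 1) \<noteq> p ^ (m - 1)"
proof
  assume H: "NQ c 1 + p ^ (s - 1) = p ^ (m - 1)"
  obtain l :: 'a where l: "l ^ (p ^ v + 1) = 1" "l ^ 2 \<noteq> 1" using exists_lam by blast
  have le: "l ^ (p ^ u + 1) = 1" using lam_e[OF l(1)] .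
  have l0: "l \<noteq> 0" using l(1) p_pos by (auto simp: power_0_left)
  define d where "d = (LEAST d. 0 < d \<and> l ^ d = 1)"
  have ex: "0 < p ^ v + 1 \<and> l ^ (p ^ v + 1) = 1" using l(1) by simp
  have dpos: "0 < d" and ld: "l ^ d = 1" using LeastI[of "\<lambda>d. 0 < d \<and> l ^ d = 1", OF ex] by (simp_all add: d_def)
  have dmin: "l ^ i \<noteq> 1" if "0 < i" "i < d" for i
    using not_less_Least[of i "\<lambda>d. 0 < d \<and> l ^ d = 1"] that by (auto simp: d_def)
  have ddvd: "d dvd n" if "l ^ n = 1" for n
  proof -
    have "l ^ (n mod d) = 1" using that pow_mod_order[OF ld, of n] by simp
    moreover have "n mod d < d" using dpos by simp
    ultimately have "n mod d = 0" using dmin by (metis neq0_conv)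
    then show ?thesis by (simp add: dvd_eq_mod_eq_0)
  qed
  define G where "G = (\<lambda>i. l ^ i) ` {..<d}"
  have injG: "inj_on (\<lambda>i. l ^ i) {..<d}"
  proof (rule inj_onI)
    fix i j assume ij: "i \<in> {..<d}" "j \<in> {..<d}" "l ^ i = l ^ j"
    show "i = j"
    proof (rule ccontr)
      assume "i \<noteq> j"
      then consider "i < j" | "j < i" by linarith
      then show False
      proof cases
        case 1
        have "l ^ j = l ^ i * l ^ (j - i)" using 1 by (simp add: power_add[symmetric])
        then have "l ^ (j - i) = 1" using ij(3) l0 by simp
        moreover have "0 < j - i" "j - i < d" using 1 ij by auto
        ultimately show False using dmin by blast
      next
        case 2
        have "l ^ i = l ^ j * l ^ (i - j)" using 2 by (simp add: power_add[symmetric])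
        then have "l ^ (i - j) = 1" using ij(3) l0 by simp
        moreover have "0 < i - j" "i - j < d" using 2 ij by auto
        ultimately show False using dmin by blast
      qed
    qed
  qed
  have cG: "card G = d" unfolding G_def using injG by (simp add: card_image)
  have Gpow: "l ^ n \<in> G" for n
    using pow_mod_order[OF ld, of n] dpos unfolding G_def by auto
  have Gmul: "g * h \<in> G" if "g \<in> G" "h \<in> G" for g h
    using that Gpow unfolding G_def by (auto simp: power_add[symmetric])
  have G0: "g \<noteq> 0" if "g \<in> G" for g using that l0 unfolding G_def by auto
  have Ge: "g ^ (p ^ u + 1) = 1" if gG: "g \<in> G" for g
  proof -
    obtain i where i: "g = l ^ i" using gG unfolding G_def by blast
    have "(l ^ i) ^ (p ^ u + 1) = (l ^ (p ^ u + 1)) ^ i" by (metis power_mult mult.commute)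
    then show ?thesis using i le by simp
  qed
  have Gperm: "(\<lambda>h. h * g) ` G = G" if "g \<in> G" for g
  proof (rule endo_inj_surj)
    show "finite G" by simp
    show "(\<lambda>h. h * g) ` G \<subseteq> G" using Gmul that by auto
    show "inj_on (\<lambda>h. h * g) G" using G0[OF that] by (auto simp: inj_on_def)
  qed
  have QG: "Qf c (g * y) = Qf c y" if "g \<in> G" for g y
  proof -
    have "(g * y) ^ (p ^ u + 1) = y ^ (p ^ u + 1)" using Ge[OF that] by (simp only: power_mult_distrib mult_1)
    then show ?thesis by (simp only: Qf_def)
  qed
  have "card G dvd card {y. Qf c y = 1}"
  proof (rule orbit_dvd[where act = "\<lambda>g y. g * y"])
    show "finite {y. Qf c y = 1}" by simp
    show "finite G" by simp
    show "g * y \<in> {y. Qf c y = 1}" if "y \<in> {y. Qf c y = 1}" "g \<in> G" for y g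
      using that QG by simp
    show "inj_on (\<lambda>g. g * y) G" if "y \<in> {y. Qf c y = 1}" for y
    proof -
      have "y \<noteq> 0" using that by auto
      then show ?thesis by (auto simp: inj_on_def)
    qed
    show "(\<lambda>h. h * (g * y)) ` G = (\<lambda>h. h * y) ` G" if "y \<in> {y. Qf c y = 1}" "g \<in> G" for y g
    proof -
      have "(\<lambda>h. h * (g * y)) ` G = (\<lambda>h. h * y) ` ((\<lambda>h. h * g) ` G)"
        by (simp add: image_image mult.assoc)
      then show ?thesis using Gperm[OF that(2)] by simp
    qed
    show "y \<in> (\<lambda>h. h * y) ` G" for y
    proof -
      have "1 \<in> G" using Gpow[of 0] by simp
      then show ?thesis by force
    qed
  qed
  then have dN: "d dvd NQ c 1" using cG by (simp add: NQ_def)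
  have dv: "d dvd p ^ v + 1" using ddvd l(1) by blast
  have "p ^ (m - 1) = p ^ (s - 1) * p ^ s"
  proof -
    have "m - 1 = (s - 1) + s" using m_2s spos by simp
    then show ?thesis by (simp add: power_add)
  qed
  then have "NQ c 1 = p ^ (s - 1) * p ^ s - p ^ (s - 1)" using H by linarith
  then have "NQ c 1 = p ^ (s - 1) * (p ^ s - 1)" by (simp add: right_diff_distrib')
  then have d1: "d dvd p ^ (s - 1) * (p ^ s - 1)" using dN by simp
  have np: "\<not> p dvd d"
  proof
    assume "p dvd d"
    then have "p dvd p ^ v + 1" using dv dvd_trans by blast
    moreover have "p dvd p ^ v" using vpos by simp
    ultimately have "p dvd 1" using dvd_add_right_iff by blast
    then show False using p_gt1 by simp
  qed
  then have "coprime p d" using pr by (simp add: prime_imp_coprime)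
  then have "coprime d (p ^ (s - 1))" by (simp add: coprime_commute)
  then have d2: "d dvd p ^ s - 1" using d1 by (simp add: coprime_dvd_mult_right_iff)
  obtain k where k: "odd k" "s = v * k" using s_vk by blast
  have "p ^ v + 1 dvd (p ^ v) ^ k + 1" by (rule nat_odd_pow_plus1_dvd[OF k(1)])
  then have "p ^ v + 1 dvd p ^ s + 1" using k(2) by (simp add: power_mult)
  then have d3: "d dvd p ^ s + 1" using dv dvd_trans by blast
  have "p ^ s + 1 - (p ^ s - 1) = 2" using p_pos by simp
  then have "d dvd 2" using dvd_diff_nat[OF d3 d2] by simp
  then have "l ^ 2 = 1" using ld by (metis dvd_def power_mult power_one)
  then show False using l(2) by simp
qed

end

context FF2
begin

lemma card_Fp0: "card (Fp - {0}) = p - 1" using card_Fp by simp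

lemma NQ_values:
  assumes c: "c \<in> Fp" "c \<noteq> 0"
  shows "NQ c 1 = p ^ (m - 1) + p ^ (s - 1)" and "NQ c 0 + (p - 1) * p ^ (s - 1) = p ^ (m - 1)"
proof -
  have split: "(\<Sum>t\<in>Fp. g t) = g 0 + (\<Sum>t\<in>Fp - {0}. g t)" for g :: "'a \<Rightarrow> nat"
    by (subst sum.remove[of Fp 0]) auto
  have sc: "(\<Sum>t\<in>Fp - {0}. g t) = (p - 1) * g 1" if "\<And>t. t \<in> Fp - {0} \<Longrightarrow> g t = g 1" for g :: "'a \<Rightarrow> nat"
  proof -
    have "(\<Sum>t\<in>Fp - {0}. g t) = (\<Sum>t\<in>Fp - {0}. g 1)" by (rule sum.cong[OF refl]) (rule that)
    then show ?thesis using card_Fp0 by simp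
  qed
  have ns: "NQ c t = NQ c 1" if "t \<in> Fp - {0}" for t using NQ_scale[OF c(1)] that by blast
  have s1: "(\<Sum>t\<in>Fp - {0}. NQ c t) = (p - 1) * NQ c 1" by (rule sc) (rule ns)
  have s2: "(\<Sum>t\<in>Fp - {0}. NQ c t * NQ c t) = (p - 1) * (NQ c 1 * NQ c 1)"
    by (rule sc) (simp only: ns)
  have E1: "NQ c 0 + (p - 1) * NQ c 1 = p ^ m"
    using sum_NQ[of c] split[of "NQ c"] s1 by simp
  have E2: "NQ c 0 * NQ c 0 + (p - 1) * (NQ c 1 * NQ c 1) = p ^ m + (p ^ m - 1) * p ^ (m - 1)"
    using sumsq_NQ[OF c] split[of "\<lambda>t. NQ c t * NQ c t"] s2 by simp
  define a where "a = int (NQ c 0)"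
  define b where "b = int (NQ c 1)"
  define A where "A = int (p ^ (m - 1))"
  define P where "P = int p"
  define B where "B = int (p ^ (s - 1))"
  have pm: "int (p ^ m) = P * A" using pm_split by (simp add: P_def A_def)
  have q1: "int (p ^ m - 1) = P * A - 1" using pm q_gt1 by (simp add: of_nat_diff)
  have P1: "int (p - 1) = P - 1" using p_pos by (simp add: P_def of_nat_diff)
  have e1: "a + (P - 1) * b = P * A"
    using arg_cong[OF E1, of int] pm P1 by (simp add: a_def b_def)
  have e2: "a * a + (P - 1) * (b * b) = P * A + (P * A - 1) * A"
    using arg_cong[OF E2, of int] pm q1 P1 by (simp add: a_def b_def A_def)
  have ae: "a = P * A - (P - 1) * b" using e1 by simp
  have "(P - 1) * (P * (b - A)^2 - A) = a * a + (P - 1) * (b * b) - (P * A + (P * A - 1) * A)"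
    unfolding ae by (simp add: power2_eq_square algebra_simps)
  then have "(P - 1) * (P * (b - A)^2 - A) = 0" using e2 by simp
  moreover have "P - 1 \<noteq> 0" using p_gt1 by (simp add: P_def)
  ultimately have h1: "P * (b - A)^2 = A" by simp
  have "m - 1 = 1 + 2 * (s - 1)" using m_2s spos by simp
  then have "A = P * B^2" by (simp add: A_def P_def B_def power_add power_mult power2_eq_square power_mult_distrib)
  then have "P * (b - A)^2 = P * B^2" using h1 by simp
  then have "(b - A)^2 = B^2" using p_gt1 by (simp add: P_def)
  then have "b - A = B \<or> b - A = - B" by (simp add: power2_eq_iff)
  moreover have "b - A \<noteq> - B"
  proof
    assume "b - A = - B"
    then have "NQ c 1 + p ^ (s - 1) = p ^ (m - 1)" unfolding b_def A_def B_def by linarith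
    then show False using NQ1_not_minus[OF c] by simp
  qed
  ultimately have bA: "b = A + B" by simp
  then show "NQ c 1 = p ^ (m - 1) + p ^ (s - 1)" unfolding b_def A_def B_def by linarith
  have "a + (P - 1) * B = A" using ae bA by (simp add: algebra_simps)
  then have "int (NQ c 0 + (p - 1) * p ^ (s - 1)) = int (p ^ (m - 1))"
    using P1 by (simp add: a_def A_def B_def)
  then show "NQ c 0 + (p - 1) * p ^ (s - 1) = p ^ (m - 1)" by (simp only: of_nat_eq_iff)
qed

end

context FF2
begin

abbreviation "e \<equiv> p ^ u + 1"

definition NzS :: "'a \<Rightarrow> 'a \<Rightarrow> ('a \<times> 'a) set" where
  "NzS a b = {(x, y). Tr (x + y ^ e) = 0 \<and> Tr (a * x + b * y) = 0}"

definition T0 :: "('a \<times> 'a) set" where "T0 = {(x, y). Tr (x + y ^ e) = 0}"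

lemma m2: "m \<ge> 2" using m_2s spos by simp

lemma pow_2m1: "p ^ m * p ^ (m - 1) = p ^ (2 * m - 1)"
proof -
  have "m + (m - 1) = 2 * m - 1" using mpos by simp
  then show ?thesis by (metis power_add)
qed

lemma card_T0: "card T0 = p ^ (2 * m - 1)"
proof -
  have "card T0 = (\<Sum>y\<in>UNIV. card {x. Tr (x + y ^ e) = 0})"
    unfolding T0_def by (rule card_pairs)
  also have "\<dots> = (\<Sum>y\<in>(UNIV::'a set). p ^ (m - 1))"
  proof (rule sum.cong[OF refl])
    fix y :: 'a
    have "{x. Tr (x + y ^ e) = 0} = {x. Tr x = - Tr (y ^ e)}"
      by (auto simp: tr_add eq_neg_iff_add_eq_0)
    then show "card {x. Tr (x + y ^ e) = 0} = p ^ (m - 1)"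
      using tr_fiber[OF Fp_neg[OF tr_in_Fp]] by simp
  qed
  also have "\<dots> = p ^ m * p ^ (m - 1)" using cardF by simp
  finally show ?thesis using pow_2m1 by simp
qed

lemma D1_eq: "D1 p m u = T0 - {(0, 0)}"
  by (auto simp: D1_def T0_def)

lemma card_D1: "card (D1 p m u :: ('a \<times> 'a) set) = p ^ (2 * m - 1) - 1"
proof -
  have "(0, 0) \<in> T0" using p_pos by (simp add: T0_def power_0_left)
  then show ?thesis using card_T0 D1_eq by simp
qed

lemma hw_cw: "hw p m u (cw p m u a b :: 'a \<times> 'a \<Rightarrow> 'a) = p ^ (2 * m - 1) - card (NzS a b)"
proof -
  have "{d \<in> D1 p m u. cw p m u a b d \<noteq> 0} = T0 - NzS a b"
    by (auto simp: D1_def T0_def NzS_def cw_def split: if_splits)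
  moreover have "NzS a b \<subseteq> T0" by (auto simp: NzS_def T0_def)
  ultimately show ?thesis using card_T0 by (simp add: hw_def card_Diff_subset)
qed

lemma sum_if_card: "(\<Sum>y\<in>(UNIV::'a set). if P y then (k::nat) else 0) = k * card {y. P y}"
proof -
  have "(\<Sum>y\<in>(UNIV::'a set). if P y then k else 0) = (\<Sum>y\<in>{y \<in> UNIV. P y}. k)"
    by (rule sum.inter_filter[symmetric]) simp
  then show ?thesis by simp
qed

lemma Nz_00: "card (NzS 0 0) = p ^ (2 * m - 1)"
  using card_T0 by (simp add: NzS_def T0_def)

lemma Nz_0b: assumes b: "b \<noteq> 0" shows "card (NzS 0 b) = p ^ (2 * m - 2)"
proof -
  have "card (NzS 0 b) = (\<Sum>y\<in>UNIV. card {x. Tr (x + y ^ e) = 0 \<and> Tr (0 * x + b * y) = 0})"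
    unfolding NzS_def by (rule card_pairs)
  also have "\<dots> = (\<Sum>y\<in>(UNIV::'a set). if Tr (b * y) = 0 then p ^ (m - 1) else 0)"
  proof (rule sum.cong[OF refl])
    fix y :: 'a
    have "{x. Tr (x + y ^ e) = 0} = {x. Tr x = - Tr (y ^ e)}"
      by (auto simp: tr_add eq_neg_iff_add_eq_0)
    then have "card {x. Tr (x + y ^ e) = 0} = p ^ (m - 1)"
      using tr_fiber[OF Fp_neg[OF tr_in_Fp]] by simp
    then show "card {x. Tr (x + y ^ e) = 0 \<and> Tr (0 * x + b * y) = 0} = (if Tr (b * y) = 0 then p ^ (m - 1) else 0)"
      by simp
  qed
  also have "\<dots> = p ^ (m - 1) * card {y. Tr (b * y) = 0}" by (rule sum_if_card)
  also have "\<dots> = p ^ (m - 1) * p ^ (m - 1)" using tr_mul_fiber[OF b Fp_0] by simp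
  also have "\<dots> = p ^ (2 * m - 2)"
  proof -
    have "(m - 1) + (m - 1) = 2 * m - 2" using mpos by simp
    then show ?thesis by (metis power_add)
  qed
  finally show ?thesis .
qed

lemma Nz_nonFp: assumes a: "a \<notin> Fp" shows "card (NzS a b) = p ^ (2 * m - 2)"
proof -
  have "card (NzS a b) = (\<Sum>y\<in>UNIV. card {x. Tr (x + y ^ e) = 0 \<and> Tr (a * x + b * y) = 0})"
    unfolding NzS_def by (rule card_pairs)
  also have "\<dots> = (\<Sum>y\<in>(UNIV::'a set). p ^ (m - 2))"
  proof (rule sum.cong[OF refl])
    fix y :: 'a
    have "{x. Tr (x + y ^ e) = 0 \<and> Tr (a * x + b * y) = 0} = {x. Tr x = - Tr (y ^ e) \<and> Tr (a * x) = - Tr (b * y)}"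
      by (auto simp: tr_add eq_neg_iff_add_eq_0)
    then show "card {x. Tr (x + y ^ e) = 0 \<and> Tr (a * x + b * y) = 0} = p ^ (m - 2)"
      using two_constraint[OF a Fp_neg[OF tr_in_Fp] Fp_neg[OF tr_in_Fp] m2] by simp
  qed
  also have "\<dots> = p ^ m * p ^ (m - 2)" using cardF by simp
  also have "\<dots> = p ^ (2 * m - 2)"
  proof -
    have "m + (m - 2) = 2 * m - 2" using m2 by simp
    then show ?thesis by (metis power_add)
  qed
  finally show ?thesis .
qed

lemma Nz_Fp:
  assumes a: "a \<in> Fp" "a \<noteq> 0"
  shows "card (NzS a (Lf a w)) = p ^ (m - 1) * NQ a (Qf a w)"
proof -
  have "card (NzS a (Lf a w)) = (\<Sum>y\<in>UNIV. card {x. Tr (x + y ^ e) = 0 \<and> Tr (a * x + Lf a w * y) = 0})"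
    unfolding NzS_def by (rule card_pairs)
  also have "\<dots> = (\<Sum>y\<in>(UNIV::'a set). if Qf a y = Tr (Lf a w * y) then p ^ (m - 1) else 0)"
  proof (rule sum.cong[OF refl])
    fix y :: 'a
    have eq1: "{x. Tr (x + y ^ e) = 0} = {x. Tr x = - Tr (y ^ e)}"
      by (auto simp: tr_add eq_neg_iff_add_eq_0)
    have c1: "card {x. Tr (x + y ^ e) = 0} = p ^ (m - 1)"
      using eq1 tr_fiber[OF Fp_neg[OF tr_in_Fp]] by simp
    have Qy: "Qf a y = a * Tr (y ^ e)" by (simp add: Qf_def tr_scal[OF a(1)])
    have iff: "Tr (x + y ^ e) = 0 \<Longrightarrow> (Tr (a * x + Lf a w * y) = 0 \<longleftrightarrow> Qf a y = Tr (Lf a w * y))" for x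
    proof -
      assume h: "Tr (x + y ^ e) = 0"
      then have tx: "Tr x = - Tr (y ^ e)" by (simp add: tr_add eq_neg_iff_add_eq_0)
      have "Tr (a * x + Lf a w * y) = a * Tr x + Tr (Lf a w * y)" by (simp add: tr_add tr_scal[OF a(1)])
      also have "\<dots> = Tr (Lf a w * y) - Qf a y" using tx Qy by simp
      finally show ?thesis by auto
    qed
    show "card {x. Tr (x + y ^ e) = 0 \<and> Tr (a * x + Lf a w * y) = 0} = (if Qf a y = Tr (Lf a w * y) then p ^ (m - 1) else 0)"
    proof (cases "Qf a y = Tr (Lf a w * y)")
      case True
      then have "{x. Tr (x + y ^ e) = 0 \<and> Tr (a * x + Lf a w * y) = 0} = {x. Tr (x + y ^ e) = 0}"
        using iff by blast
      then show ?thesis using True c1 by simp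
    next
      case False
      then have "{x. Tr (x + y ^ e) = 0 \<and> Tr (a * x + Lf a w * y) = 0} = {}"
        using iff by blast
      then show ?thesis using False by simp
    qed
  qed
  also have "\<dots> = p ^ (m - 1) * card {y. Qf a y = Tr (Lf a w * y)}" by (rule sum_if_card)
  also have "card {y. Qf a y = Tr (Lf a w * y)} = NQ a (Qf a w)"
  proof -
    have key: "Qf a (y - w) = Qf a y + Qf a w - Tr (y * Lf a w)" for y
    proof -
      have "Lf a (- w) = - Lf a w" using L_add[of a w "- w"] L_0[of a] by (simp add: eq_neg_iff_add_eq_0 add.commute)
      then have "Qf a (y + - w) = Qf a y + Qf a w - Tr (y * Lf a w)"
        using Q_add[OF a(1), of y "- w"] Q_neg[of a w] by (simp add: tr_neg)
      then show ?thesis by simp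
    qed
    have "bij_betw (\<lambda>y. y - w) {y. Qf a y = Tr (Lf a w * y)} {y. Qf a y = Qf a w}"
    proof (rule bij_betw_byWitness[where f' = "\<lambda>y. y + w"])
      show "(\<lambda>y. y - w) ` {y. Qf a y = Tr (Lf a w * y)} \<subseteq> {y. Qf a y = Qf a w}"
        using key by (auto simp: mult.commute)
      show "(\<lambda>y. y + w) ` {y. Qf a y = Qf a w} \<subseteq> {y. Qf a y = Tr (Lf a w * y)}"
      proof (rule image_subsetI)
        fix y assume "y \<in> {y. Qf a y = Qf a w}"
        then have "Qf a y = Qf a w" by simp
        moreover have "Qf a (y + w - w) = Qf a (y + w) + Qf a w - Tr ((y + w) * Lf a w)" by (rule key)
        ultimately show "y + w \<in> {y. Qf a y = Tr (Lf a w * y)}" by (simp add: mult.commute)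
      qed
    qed auto
    then show ?thesis by (simp add: NQ_def bij_betw_same_card)
  qed
  finally show ?thesis .
qed

end

lemma card_pairs1:
  fixes P :: "'a::finite \<Rightarrow> 'b::finite \<Rightarrow> bool"
  shows "card {(x, y). P x y} = (\<Sum>x\<in>UNIV. card {y. P x y})"
proof -
  have "{(x, y). P x y} = (\<Union>x\<in>UNIV. {x} \<times> {y. P x y})" by auto
  then have "card {(x, y). P x y} = (\<Sum>x\<in>UNIV. card ({x} \<times> {y. P x y}))"
    by (simp add: card_UN_disjoint disjoint_iff)
  then show ?thesis by (simp add: card_cartesian_product)
qed

context FF2
begin

definition "RW1 = (real p - 1) * real p ^ (2 * m - 2)"
definition "RW2 = (real p - 1) * real p ^ (2 * m - 2) * (1 + 1 / real p ^ s)"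
definition "RW3 = (real p - 1) * real p ^ (2 * m - 2) * (1 - 1 / ((real p - 1) * real p ^ s))"

definition "Zr = real p ^ (m - 1)"
definition "Sr = real p ^ (s - 1)"

lemma Zr_eq: "Zr = real p * Sr ^ 2"
proof -
  have "m - 1 = 1 + (s - 1) * 2" using m_2s spos by simp
  then show ?thesis by (simp add: Zr_def Sr_def power_add power_mult)
qed

lemma ps_eq: "real p ^ s = real p * Sr"
proof -
  have "s = 1 + (s - 1)" using spos by simp
  then show ?thesis unfolding Sr_def by (metis power_add power_one_right)
qed

lemma p2m2: "real p ^ (2 * m - 2) = Zr ^ 2"
proof -
  have "2 * m - 2 = (m - 1) * 2" using mpos by simp
  then show ?thesis by (simp add: Zr_def power_mult)
qed

lemma p2m1: "real p ^ (2 * m - 1) = real p * Zr ^ 2"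
proof -
  have "2 * m - 1 = 1 + (m - 1) * 2" using mpos by simp
  then show ?thesis by (simp add: Zr_def power_mult power_add)
qed

lemma Sr_pos: "Sr > 0" using p_pos by (simp add: Sr_def)
lemma P_ge3: "real p \<ge> 3" using p_ge3 by simp

lemma RW1_eq: "RW1 = (real p - 1) * Zr ^ 2" by (simp add: RW1_def p2m2)
lemma RW2_eq: "RW2 = (real p - 1) * Zr ^ 2 + (real p - 1) * Zr * Sr"
  using Sr_pos P_ge3 unfolding RW2_def p2m2 ps_eq Zr_eq by (simp add: field_simps power2_eq_square)
lemma RW3_eq: "RW3 = (real p - 1) * Zr ^ 2 - Zr * Sr"
  using Sr_pos P_ge3 unfolding RW3_def p2m2 ps_eq Zr_eq by (simp add: field_simps power2_eq_square)

lemma RW_pos: "RW1 > 0" "RW2 > 0" "RW3 > 0"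
proof -
  have Z: "Zr = real p * Sr ^ 2" by (rule Zr_eq)
  have Zp: "Zr > 0" using Z Sr_pos P_ge3 by simp
  show "RW1 > 0" using Zp P_ge3 by (simp add: RW1_eq)
  have p1: "real p - 1 > 0" using P_ge3 by simp
  show "RW2 > 0" unfolding RW2_eq using Zp p1 Sr_pos by (intro add_pos_pos mult_pos_pos) auto
  have S1: "Sr \<ge> 1" using p_pos by (simp add: Sr_def)
  have "Sr \<le> real p * Sr" using S1 P_ge3 by simp
  also have "real p * Sr \<le> real p * Sr * Sr" using S1 P_ge3 by simp
  finally have "Sr \<le> Zr" using Z by (simp add: power2_eq_square mult.assoc)
  then have "Zr * Sr \<le> Zr * Zr" using Zp by (intro mult_left_mono) auto
  moreover have "Zr * Zr < (real p - 1) * (Zr * Zr)" using Zp P_ge3 by simp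
  ultimately show "RW3 > 0" unfolding RW3_eq power2_eq_square by linarith
qed

lemma RW_distinct: "RW1 \<noteq> RW2" "RW1 \<noteq> RW3" "RW2 \<noteq> RW3"
proof -
  have Zp: "Zr > 0" using Zr_eq Sr_pos P_ge3 by simp
  have a: "(real p - 1) * Zr * Sr > 0" using Zp Sr_pos P_ge3 by simp
  have b: "Zr * Sr > 0" using Zp Sr_pos by simp
  show "RW1 \<noteq> RW2" unfolding RW1_eq RW2_eq using a by linarith
  show "RW1 \<noteq> RW3" unfolding RW1_eq RW3_eq using b by linarith
  show "RW2 \<noteq> RW3" unfolding RW2_eq RW3_eq using a b by linarith
qed

abbreviation wt :: "'a \<Rightarrow> 'a \<Rightarrow> nat" where "wt a b \<equiv> hw p m u (cw p m u a b :: 'a \<times> 'a \<Rightarrow> 'a)"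

lemma NzS_le: "card (NzS a b) \<le> p ^ (2 * m - 1)"
proof -
  have "NzS a b \<subseteq> T0" by (auto simp: NzS_def T0_def)
  then show ?thesis using card_T0 card_mono[of T0] by simp
qed

lemma wt_real: "real (wt a b) = real p * Zr ^ 2 - real (card (NzS a b))"
  using NzS_le by (simp add: hw_cw of_nat_diff p2m1[symmetric])

lemma wt_00: "wt 0 0 = 0" by (simp add: hw_cw Nz_00)

lemma wt_W1: "(a = 0 \<and> b \<noteq> 0) \<or> a \<notin> Fp \<Longrightarrow> real (wt a b) = RW1"
proof -
  assume h: "(a = 0 \<and> b \<noteq> 0) \<or> a \<notin> Fp"
  then have "card (NzS a b) = p ^ (2 * m - 2)" using Nz_0b Nz_nonFp by blast
  then have "real (card (NzS a b)) = Zr ^ 2" using p2m2 by simp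
  then show ?thesis by (simp add: wt_real RW1_eq algebra_simps)
qed

lemma wt_Fp:
  assumes a: "a \<in> Fp" "a \<noteq> 0"
  shows "real (wt a (Lf a w)) = (if Qf a w = 0 then RW2 else RW3)"
proof -
  have N: "real (card (NzS a (Lf a w))) = Zr * real (NQ a (Qf a w))"
    using Nz_Fp[OF a] by (simp add: Zr_def)
  have "real (NQ a 0 + (p - 1) * p ^ (s - 1)) = real (p ^ (m - 1))"
    using NQ_values(2)[OF a] by (simp only:)
  moreover have "real (p - 1) = real p - 1" using p_pos by (simp add: of_nat_diff)
  ultimately have "real (NQ a 0) + (real p - 1) * Sr = Zr"
    by (simp add: Zr_def Sr_def)
  then have v0: "real (NQ a 0) = Zr - (real p - 1) * Sr" by linarith
  have v1: "real (NQ a 1) = Zr + Sr"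
    using NQ_values(1)[OF a] by (simp add: Zr_def Sr_def)
  show ?thesis
  proof (cases "Qf a w = 0")
    case True
    then have "real (wt a (Lf a w)) = real p * Zr ^ 2 - Zr * (Zr - (real p - 1) * Sr)"
      using wt_real N v0 by simp
    also have "\<dots> = RW2" unfolding RW2_eq power2_eq_square by algebra
    finally show ?thesis using True by simp
  next
    case False
    then have "NQ a (Qf a w) = NQ a 1" using NQ_scale[OF a(1) Q_in_Fp] by blast
    then have "real (wt a (Lf a w)) = real p * Zr ^ 2 - Zr * (Zr + Sr)"
      using wt_real N v1 by simp
    also have "\<dots> = RW3" unfolding RW3_eq power2_eq_square by algebra
    finally show ?thesis using False by simp
  qed
qed

definition Linv :: "'a \<Rightarrow> 'a \<Rightarrow> 'a" where "Linv a = inv (Lf a)"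

lemma L_Linv: "a \<in> Fp \<Longrightarrow> a \<noteq> 0 \<Longrightarrow> Lf a (Linv a b) = b"
  using L_bij by (simp add: Linv_def bij_def surj_f_inv_f)

lemma wt_cases:
  "real (wt a b) = 0 \<and> a = 0 \<and> b = 0 \<or> real (wt a b) = RW1 \<or> real (wt a b) = RW2 \<or> real (wt a b) = RW3"
proof (cases "a \<in> Fp \<and> a \<noteq> 0")
  case True
  then have "real (wt a b) = real (wt a (Lf a (Linv a b)))" using L_Linv by simp
  then show ?thesis using wt_Fp True by (auto split: if_splits)
next
  case False
  then show ?thesis using wt_W1 wt_00 by (cases "b = 0") auto
qed

lemma wt_pos: "(a, b) \<noteq> (0, 0) \<Longrightarrow> wt a b > 0"
  using wt_cases[of a b] RW_pos by auto

end

context FF2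
begin

lemma cw_00: "(cw p m u 0 0 :: 'a \<times> 'a \<Rightarrow> 'a) = (\<lambda>_. 0)"
  by (auto simp: cw_def)

lemma hw_zero: "hw p m u ((\<lambda>_. 0) :: 'a \<times> 'a \<Rightarrow> 'a) = 0"
  by (simp add: hw_def)

lemma cw_diff: "(\<lambda>d. (cw p m u a b :: 'a \<times> 'a \<Rightarrow> 'a) d - cw p m u a' b' d) = cw p m u (a - a') (b - b')"
proof (rule ext)
  fix d :: "'a \<times> 'a"
  obtain x y where d: "d = (x, y)" by (cases d)
  have "(a - a') * x + (b - b') * y = (a * x + b * y) - (a' * x + b' * y)" by algebra
  then show "cw p m u a b d - cw p m u a' b' d = cw p m u (a - a') (b - b') d"
    unfolding d cw_def by (simp add: tr_diff)
qed

lemma cw_add: "(\<lambda>d. (cw p m u a b :: 'a \<times> 'a \<Rightarrow> 'a) d + cw p m u a' b' d) = cw p m u (a + a') (b + b')"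
proof (rule ext)
  fix d :: "'a \<times> 'a"
  obtain x y where d: "d = (x, y)" by (cases d)
  have "(a + a') * x + (b + b') * y = (a * x + b * y) + (a' * x + b' * y)" by algebra
  then show "cw p m u a b d + cw p m u a' b' d = cw p m u (a + a') (b + b') d"
    unfolding d cw_def by (simp add: tr_add)
qed

lemma cw_smul: "(\<lambda>d. of_nat k * (cw p m u a b :: 'a \<times> 'a \<Rightarrow> 'a) d) = cw p m u (of_nat k * a) (of_nat k * b)"
proof (rule ext)
  fix d :: "'a \<times> 'a"
  have k: "(of_nat k :: 'a) \<in> Fp" by (rule of_nat_in_Fp)
  obtain x y where d: "d = (x, y)" by (cases d)
  have "of_nat k * a * x + of_nat k * b * y = (of_nat k :: 'a) * (a * x + b * y)" by algebra
  then show "of_nat k * cw p m u a b d = cw p m u (of_nat k * a) (of_nat k * b) d"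
    unfolding d cw_def by (simp add: tr_scal[OF k])
qed

lemma cw_inj: "(cw p m u a b :: 'a \<times> 'a \<Rightarrow> 'a) = cw p m u a' b' \<Longrightarrow> a = a' \<and> b = b'"
proof -
  assume h: "(cw p m u a b :: 'a \<times> 'a \<Rightarrow> 'a) = cw p m u a' b'"
  have "cw p m u (a - a') (b - b') = ((\<lambda>_. 0) :: 'a \<times> 'a \<Rightarrow> 'a)"
    using cw_diff[of a b a' b'] h by simp
  then have "wt (a - a') (b - b') = 0" using hw_zero by simp
  then have "(a - a', b - b') = (0, 0)" using wt_pos by (metis less_irrefl)
  then show ?thesis by simp
qed

definition Phi :: "'a \<times> 'a \<Rightarrow> ('a \<times> 'a \<Rightarrow> 'a)" where "Phi ab = cw p m u (fst ab) (snd ab)"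

lemma Phi_inj: "inj Phi"
  by (rule injI) (auto simp: Phi_def dest: cw_inj)

lemma code_eq: "(code p m u :: ('a \<times> 'a \<Rightarrow> 'a) set) = range Phi"
proof
  show "code p m u \<subseteq> range Phi"
  proof
    fix c assume "c \<in> (code p m u :: ('a \<times> 'a \<Rightarrow> 'a) set)"
    then obtain a b where "c = cw p m u a b" by (auto simp: code_def)
    then have "c = Phi (a, b)" by (simp add: Phi_def)
    then show "c \<in> range Phi" by blast
  qed
  show "range Phi \<subseteq> code p m u" by (auto simp: code_def Phi_def)
qed

lemma card_code: "card (code p m u :: ('a \<times> 'a \<Rightarrow> 'a) set) = p ^ (2 * m)"
proof -
  have "card (range Phi) = card (UNIV :: ('a \<times> 'a) set)" using Phi_inj by (simp add: card_image)
  also have "\<dots> = p ^ m * p ^ m" using cardF by (simp add: UNIV_Times_UNIV[symmetric] card_cartesian_product del: UNIV_Times_UNIV)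
  finally show ?thesis by (simp add: code_eq mult_2 power_add)
qed

lemma count_code:
  "card {c \<in> (code p m u :: ('a \<times> 'a \<Rightarrow> 'a) set). R (hw p m u c)} = card {(a, b). R (wt a b)}"
proof -
  have "{c \<in> (code p m u :: ('a \<times> 'a \<Rightarrow> 'a) set). R (hw p m u c)} = Phi ` {(a, b). R (wt a b)}"
    by (auto simp: code_eq Phi_def)
  moreover have "inj_on Phi {(a, b). R (wt a b)}" using Phi_inj by (simp add: inj_on_def inj_def)
  ultimately show ?thesis by (simp add: card_image)
qed

lemma card_slice_Fp:
  assumes a: "a \<in> Fp" "a \<noteq> 0"
  shows "card {b. R (wt a b)} = card {w. R (wt a (Lf a w))}"
proof -
  have "bij_betw (Lf a) {w. R (wt a (Lf a w))} {b. R (wt a b)}"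
  proof (rule bij_betw_byWitness[where f' = "Linv a"])
    show "\<forall>w\<in>{w. R (wt a (Lf a w))}. Linv a (Lf a w) = w"
      using L_bij[OF a] by (simp add: Linv_def bij_def inv_f_f)
    show "\<forall>b\<in>{b. R (wt a b)}. Lf a (Linv a b) = b" using L_Linv[OF a] by simp
    show "Lf a ` {w. R (wt a (Lf a w))} \<subseteq> {b. R (wt a b)}" by auto
    show "Linv a ` {b. R (wt a b)} \<subseteq> {w. R (wt a (Lf a w))}" using L_Linv[OF a] by auto
  qed
  then show ?thesis by (simp add: bij_betw_same_card)
qed

lemma sum_Fp0_const:
  "(\<Sum>a\<in>(UNIV::'a set). if a \<in> Fp \<and> a \<noteq> 0 then (f a :: nat) else 0) = (\<Sum>a\<in>Fp - {0}. f a)"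
proof -
  have "(\<Sum>a\<in>(UNIV::'a set). if a \<in> Fp \<and> a \<noteq> 0 then f a else 0) = (\<Sum>a\<in>{a \<in> UNIV. a \<in> Fp \<and> a \<noteq> 0}. f a)"
    by (rule sum.inter_filter[symmetric]) simp
  also have "{a \<in> UNIV. a \<in> Fp \<and> a \<noteq> 0} = Fp - {0}" by auto
  finally show ?thesis .
qed

lemma NQ0_real: "a \<in> Fp \<Longrightarrow> a \<noteq> 0 \<Longrightarrow> real (NQ a 0) = Zr - (real p - 1) * Sr"
proof -
  assume a: "a \<in> Fp" "a \<noteq> 0"
  have "real (NQ a 0 + (p - 1) * p ^ (s - 1)) = real (p ^ (m - 1))"
    using NQ_values(2)[OF a] by (simp only:)
  moreover have "real (p - 1) = real p - 1" using p_pos by (simp add: of_nat_diff)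
  ultimately have "real (NQ a 0) + (real p - 1) * Sr = Zr"
    by (simp add: Zr_def Sr_def)
  then show ?thesis by linarith
qed

lemma count_W2: "real (card {(a, b). real (wt a b) = RW2}) = (real p - 1) * (Zr - (real p - 1) * Sr)"
proof -
  have slice: "card {b. real (wt a b) = RW2} = (if a \<in> Fp \<and> a \<noteq> 0 then NQ a 0 else 0)" for a
  proof (cases "a \<in> Fp \<and> a \<noteq> 0")
    case True
    then have "card {b. real (wt a b) = RW2} = card {w. real (wt a (Lf a w)) = RW2}"
      using card_slice_Fp[of a "\<lambda>r. real r = RW2"] by simp
    also have "{w. real (wt a (Lf a w)) = RW2} = {w. Qf a w = 0}"
      using wt_Fp True RW_distinct by auto
    finally show ?thesis using True by (simp add: NQ_def)
  next
    case False
    have "{b. real (wt a b) = RW2} = {}"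
    proof -
      have "real (wt a b) \<noteq> RW2" for b
      proof (cases "a = 0 \<and> b = 0")
        case True then show ?thesis using wt_00 RW_pos by auto
      next
        case False
        then have "real (wt a b) = RW1" using wt_W1 \<open>\<not> (a \<in> Fp \<and> a \<noteq> 0)\<close> by auto
        then show ?thesis using RW_distinct by simp
      qed
      then show ?thesis by auto
    qed
    moreover have "(if a \<in> Fp \<and> a \<noteq> 0 then NQ a 0 else 0) = 0" using False by auto
    ultimately show ?thesis by (metis card.empty)
  qed
  have "card {(a, b). real (wt a b) = RW2} = (\<Sum>a\<in>UNIV. card {b. real (wt a b) = RW2})"
    by (rule card_pairs1)
  also have "\<dots> = (\<Sum>a\<in>Fp - {0}. NQ a 0)" by (simp only: slice sum_Fp0_const)
  finally have "real (card {(a, b). real (wt a b) = RW2}) = (\<Sum>a\<in>Fp - {0}. real (NQ a 0))" by simp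
  also have "\<dots> = (\<Sum>a\<in>Fp - {0}. Zr - (real p - 1) * Sr)" by (rule sum.cong[OF refl]) (simp add: NQ0_real)
  also have "\<dots> = real (p - 1) * (Zr - (real p - 1) * Sr)" using card_Fp0 by simp
  finally show ?thesis using p_pos by (simp add: of_nat_diff)
qed

lemma count_W3: "real (card {(a, b). real (wt a b) = RW3}) = (real p - 1) * (real p * Zr - Zr + (real p - 1) * Sr)"
proof -
  have slice: "card {b. real (wt a b) = RW3} = (if a \<in> Fp \<and> a \<noteq> 0 then card {w. Qf a w \<noteq> 0} else 0)" for a
  proof (cases "a \<in> Fp \<and> a \<noteq> 0")
    case True
    then have "card {b. real (wt a b) = RW3} = card {w. real (wt a (Lf a w)) = RW3}"
      using card_slice_Fp[of a "\<lambda>r. real r = RW3"] by simp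
    also have "{w. real (wt a (Lf a w)) = RW3} = {w. Qf a w \<noteq> 0}"
      using wt_Fp True RW_distinct by auto
    finally show ?thesis using True by simp
  next
    case False
    have "{b. real (wt a b) = RW3} = {}"
    proof -
      have "real (wt a b) \<noteq> RW3" for b
      proof (cases "a = 0 \<and> b = 0")
        case True then show ?thesis using wt_00 RW_pos by auto
      next
        case False
        then have "real (wt a b) = RW1" using wt_W1 \<open>\<not> (a \<in> Fp \<and> a \<noteq> 0)\<close> by auto
        then show ?thesis using RW_distinct by simp
      qed
      then show ?thesis by auto
    qed
    moreover have "(if a \<in> Fp \<and> a \<noteq> 0 then card {w. Qf a w \<noteq> 0} else 0) = 0" using False by auto
    ultimately show ?thesis by (metis card.empty)
  qed
  have cq: "real (card {w::'a. Qf a w \<noteq> 0}) = real p * Zr - real (NQ a 0)" for a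
  proof -
    have "{w::'a. Qf a w \<noteq> 0} = UNIV - {w. Qf a w = 0}" by auto
    then have "card {w::'a. Qf a w \<noteq> 0} = p ^ m - NQ a 0" using cardF by (simp add: NQ_def card_Diff_subset)
    moreover have "NQ a 0 \<le> p ^ m" using cardF card_mono[of UNIV "{w::'a. Qf a w = 0}"] by (simp add: NQ_def)
    moreover have "real (p ^ m) = real p * Zr" using pm_split by (simp add: Zr_def)
    ultimately show ?thesis by (simp add: of_nat_diff)
  qed
  have "card {(a, b). real (wt a b) = RW3} = (\<Sum>a\<in>UNIV. card {b. real (wt a b) = RW3})"
    by (rule card_pairs1)
  also have "\<dots> = (\<Sum>a\<in>Fp - {0}. card {w. Qf a w \<noteq> 0})" by (simp only: slice sum_Fp0_const)
  finally have "real (card {(a, b). real (wt a b) = RW3}) = (\<Sum>a\<in>Fp - {0}. real (card {w. Qf a w \<noteq> 0}))" by simp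
  also have "\<dots> = (\<Sum>a\<in>Fp - {0}. real p * Zr - Zr + (real p - 1) * Sr)"
    by (rule sum.cong[OF refl]) (simp add: cq NQ0_real)
  also have "\<dots> = real (p - 1) * (real p * Zr - Zr + (real p - 1) * Sr)" using card_Fp0 by simp
  finally show ?thesis using p_pos by (simp add: of_nat_diff)
qed

end

lemma nat_count_arith:
  fixes q p :: nat
  assumes "p \<le> q" "1 \<le> p"
  shows "q - 1 + q * (q - p) = q * q - 1 - (p - 1) * q"
proof -
  obtain d where d: "q = p + d" using assms(1) le_Suc_ex by blast
  obtain p' where p': "p = Suc p'" using assms(2) by (cases p) auto
  show ?thesis unfolding d p' by (simp add: algebra_simps)
qed

context FF2
begin

lemma count_W1: "card {(a, b). real (wt a b) = RW1} = p ^ (2 * m) - 1 - (p - 1) * p ^ m"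
proof -
  define q where "q = p ^ m"
  have slice: "card {b. real (wt a b) = RW1} = (if a = 0 then q - 1 else if a \<in> Fp then 0 else q)" for a
  proof (cases "a = 0")
    case True
    have "{b. real (wt a b) = RW1} = UNIV - {0}"
    proof -
      have "real (wt a b) = RW1 \<longleftrightarrow> b \<noteq> 0" for b
        using True wt_W1[of a b] wt_00 RW_pos by auto
      then show ?thesis by auto
    qed
    then show ?thesis using True cardF by (simp add: q_def)
  next
    case a0: False
    show ?thesis
    proof (cases "a \<in> Fp")
      case True
      have "{b. real (wt a b) = RW1} = {}"
      proof -
        have "real (wt a b) \<noteq> RW1" for b
        proof -
          have "real (wt a b) = real (wt a (Lf a (Linv a b)))" using L_Linv True a0 by simp
          then show ?thesis using wt_Fp True a0 RW_distinct by (auto split: if_splits)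
        qed
        then show ?thesis by auto
      qed
      then show ?thesis using True a0 by simp
    next
      case False
      then have "{b. real (wt a b) = RW1} = UNIV" using wt_W1 by auto
      then show ?thesis using False a0 cardF by (simp add: q_def)
    qed
  qed
  have "card {(a, b). real (wt a b) = RW1} = (\<Sum>a\<in>UNIV. card {b. real (wt a b) = RW1})"
    by (rule card_pairs1)
  also have "\<dots> = (\<Sum>a\<in>(UNIV::'a set). if a = 0 then q - 1 else if a \<in> Fp then 0 else q)"
    by (simp only: slice)
  also have "\<dots> = (q - 1) + (\<Sum>a\<in>UNIV - {0::'a}. if a = 0 then q - 1 else if a \<in> Fp then 0 else q)"
    by (subst sum.remove[of UNIV 0]) auto
  also have "(\<Sum>a\<in>UNIV - {0::'a}. if a = 0 then q - 1 else if a \<in> Fp then 0 else q)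
      = (\<Sum>a\<in>UNIV - {0::'a}. if a \<notin> Fp then q else 0)"
    by (rule sum.cong) auto
  also have "\<dots> = (\<Sum>a\<in>{a \<in> UNIV - {0::'a}. a \<notin> Fp}. q)"
    by (rule sum.inter_filter[symmetric]) simp
  also have "{a \<in> UNIV - {0::'a}. a \<notin> Fp} = UNIV - Fp" by auto
  also have "(\<Sum>a\<in>UNIV - Fp. q) = (q - p) * q"
  proof -
    have "card (UNIV - Fp) = q - p" using cardF card_Fp by (simp add: q_def card_Diff_subset)
    then show ?thesis by simp
  qed
  finally have "card {(a, b). real (wt a b) = RW1} = q - 1 + q * (q - p)" by (simp add: mult.commute)
  also have "\<dots> = q * q - 1 - (p - 1) * q"
  proof (rule nat_count_arith)
    have "p ^ 1 \<le> p ^ m" using mpos p_pos by (intro power_increasing) auto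
    then show "p \<le> q" unfolding q_def by simp
    show "1 \<le> p" using p_pos by simp
  qed
  finally show ?thesis by (simp add: q_def mult_2 power_add)
qed

lemma count_W0: "card {(a, b). wt a b = 0} = 1"
proof -
  have "{(a, b). wt a b = 0} = {(0::'a, 0::'a)}"
  proof (rule set_eqI)
    fix ab :: "'a \<times> 'a"
    obtain a b where ab: "ab = (a, b)" by (cases ab)
    show "ab \<in> {(a, b). wt a b = 0} \<longleftrightarrow> ab \<in> {(0, 0)}"
    proof (cases "(a, b) = (0, 0)")
      case True
      then show ?thesis using ab wt_00 by simp
    next
      case False
      then have "wt a b \<noteq> 0" using wt_pos[OF False] by simp
      then show ?thesis using ab False by simp
    qed
  qed
  then show ?thesis by simp
qed

lemma three_weights:
  "card {hw p m u c | c. c \<in> (code p m u :: ('a \<times> 'a \<Rightarrow> 'a) set) \<and> c \<noteq> (\<lambda>_. 0)} = 3"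
proof -
  have NQlt: "NQ 1 0 < p ^ m"
  proof -
    have "NQ 1 0 \<le> p ^ (m - 1)" using NQ_values(2)[of 1] by simp
    also have "p ^ (m - 1) < p ^ m" using mpos p_gt1 by simp
    finally show ?thesis .
  qed
  have "{w::'a. Qf 1 w = 0} \<noteq> UNIV"
  proof
    assume "{w::'a. Qf 1 w = 0} = UNIV"
    then have "NQ 1 0 = p ^ m" using cardF by (simp add: NQ_def)
    then show False using NQlt by simp
  qed
  then obtain w3 :: 'a where w3: "Qf 1 w3 \<noteq> 0" by auto
  define n1 where "n1 = wt 0 1"
  define n2 where "n2 = wt 1 (Lf 1 0)"
  define n3 where "n3 = wt 1 (Lf 1 w3)"
  have r1: "real n1 = RW1" unfolding n1_def using wt_W1 by simp
  have r2: "real n2 = RW2" unfolding n2_def using wt_Fp[of 1 0] by simp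
  have r3: "real n3 = RW3" unfolding n3_def using wt_Fp[of 1 w3] w3 by simp
  have S: "{hw p m u c | c. c \<in> (code p m u :: ('a \<times> 'a \<Rightarrow> 'a) set) \<and> c \<noteq> (\<lambda>_. 0)} = {n1, n2, n3}"
  proof
    show "{hw p m u c | c. c \<in> (code p m u :: ('a \<times> 'a \<Rightarrow> 'a) set) \<and> c \<noteq> (\<lambda>_. 0)} \<subseteq> {n1, n2, n3}"
    proof (rule subsetI)
      fix x assume "x \<in> {hw p m u c | c. c \<in> (code p m u :: ('a \<times> 'a \<Rightarrow> 'a) set) \<and> c \<noteq> (\<lambda>_. 0)}"
      then obtain c :: "'a \<times> 'a \<Rightarrow> 'a" where xc: "x = hw p m u c" and c: "c \<in> code p m u" "c \<noteq> (\<lambda>_. 0)" by blast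
      then obtain a b where ab: "c = cw p m u a b" by (auto simp: code_def)
      have "(a, b) \<noteq> (0, 0)" using c ab cw_00 by auto
      then have "real (wt a b) = RW1 \<or> real (wt a b) = RW2 \<or> real (wt a b) = RW3"
        using wt_cases[of a b] by auto
      then have "wt a b = n1 \<or> wt a b = n2 \<or> wt a b = n3" using r1 r2 r3 by (metis of_nat_eq_iff)
      then show "x \<in> {n1, n2, n3}" using ab xc by simp
    qed
    have z: "(\<lambda>_. 0) \<noteq> (cw p m u a b :: 'a \<times> 'a \<Rightarrow> 'a)" if "(a, b) \<noteq> (0, 0)" for a b
    proof
      assume "(\<lambda>_. 0) = (cw p m u a b :: 'a \<times> 'a \<Rightarrow> 'a)"
      then have "cw p m u 0 0 = (cw p m u a b :: 'a \<times> 'a \<Rightarrow> 'a)" using cw_00 by simp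
      then show False using cw_inj that by force
    qed
    have mem: "wt a b \<in> {hw p m u c | c. c \<in> (code p m u :: ('a \<times> 'a \<Rightarrow> 'a) set) \<and> c \<noteq> (\<lambda>_. 0)}"
      if "(a, b) \<noteq> (0, 0)" for a b
    proof -
      have "cw p m u a b \<in> (code p m u :: ('a \<times> 'a \<Rightarrow> 'a) set)" by (auto simp: code_def)
      moreover have "cw p m u a b \<noteq> ((\<lambda>_. 0) :: 'a \<times> 'a \<Rightarrow> 'a)" using z[OF that] by metis
      ultimately show ?thesis by blast
    qed
    have "(0::'a, 1::'a) \<noteq> (0, 0)" "(1::'a, Lf 1 0) \<noteq> (0, 0)" "(1::'a, Lf 1 w3) \<noteq> (0, 0)" by simp_all
    then show "{n1, n2, n3} \<subseteq> {hw p m u c | c. c \<in> (code p m u :: ('a \<times> 'a \<Rightarrow> 'a) set) \<and> c \<noteq> (\<lambda>_. 0)}"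
      using mem unfolding n1_def n2_def n3_def by blast
  qed
  have "n1 \<noteq> n2" "n1 \<noteq> n3" "n2 \<noteq> n3" using r1 r2 r3 RW_distinct by auto
  then show ?thesis unfolding S by simp
qed

end

theorem theorem3:
  fixes p m u s :: nat
  assumes "prime p" and "odd p" and "m > 0" and "even m" and "s = m div 2"
    and "card (UNIV :: 'a::{finite,field} set) = p ^ m"
    and "u > 0"
    and "(m div gcd m u) mod 4 = 2"
  defines "C \<equiv> (code p m u :: ('a \<times> 'a \<Rightarrow> 'a) set)"
  shows
    \<comment> \<open>linear code over F_p: codewords have entries in F_p, closed under + and F_p-scaling\<close>
    "(\<forall>c\<in>C. \<forall>d\<in>D1 p m u. c d \<in> range (of_nat :: nat \<Rightarrow> 'a))
     \<and> (\<forall>c1\<in>C. \<forall>c2\<in>C. (\<lambda>d. c1 d + c2 d) \<in> C)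
     \<and> (\<forall>c\<in>C. \<forall>k::nat. (\<lambda>d. of_nat k * c d) \<in> C)
     \<comment> \<open>length p^(2m-1) - 1 and dimension 2m\<close>
     \<and> card (D1 p m u :: ('a \<times> 'a) set) = p ^ (2*m - 1) - 1
     \<and> card C = p ^ (2*m)
     \<comment> \<open>three-weight\<close>
     \<and> card {hw p m u c | c. c \<in> C \<and> c \<noteq> (\<lambda>_. 0)} = 3
     \<comment> \<open>weight distribution\<close>
     \<and> card {c \<in> C. hw p m u c = 0} = 1
     \<and> card {c \<in> C. real (hw p m u c) = (real p - 1) * real p ^ (2*m - 2)}
         = p ^ (2*m) - 1 - (p - 1) * p ^ m
     \<and> real (card {c \<in> C. real (hw p m u c) = (real p - 1) * real p ^ (2*m - 2) * (1 + 1 / real p ^ s)})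
         = (real p - 1) * (real p ^ (m - 1) - real p ^ s + real p ^ (s - 1))
     \<and> real (card {c \<in> C. real (hw p m u c)
                     = (real p - 1) * real p ^ (2*m - 2) * (1 - 1 / ((real p - 1) * real p ^ s))})
         = (real p - 1) * (real p ^ s + 1) * (real p ^ s - real p ^ (s - 1))"
proof -
  interpret F: FF2 p m "TYPE('a)" u
    by unfold_locales (use assms in auto)
  have sF: "s = F.s" using assms(5) by (simp add: F.s_def)
  have Ceq: "C = range F.Phi" unfolding C_def by (rule F.code_eq)
  have Cmem: "c \<in> C \<longleftrightarrow> (\<exists>a b. c = cw p m u a b)" for c
    unfolding C_def code_def by auto
  have P1: "\<forall>c\<in>C. \<forall>d\<in>(D1 p m u :: ('a \<times> 'a) set). c d \<in> range (of_nat :: nat \<Rightarrow> 'a)"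
  proof (intro ballI)
    fix c d assume c: "c \<in> C" and d: "d \<in> (D1 p m u :: ('a \<times> 'a) set)"
    obtain a b where ab: "c = cw p m u a b" using c Cmem by blast
    obtain x y where xy: "d = (x, y)" by (cases d)
    have "c d = tr p m (a * x + b * y)" using d unfolding ab xy cw_def by simp
    then show "c d \<in> range (of_nat :: nat \<Rightarrow> 'a)" using F.tr_in_Fp F.Fp_eq by simp
  qed
  have P2: "\<forall>c1\<in>C. \<forall>c2\<in>C. (\<lambda>d. c1 d + c2 d) \<in> C"
  proof (intro ballI)
    fix c1 c2 assume "c1 \<in> C" "c2 \<in> C"
    then obtain a b a' b' where "c1 = cw p m u a b" "c2 = cw p m u a' b'" using Cmem by metis
    then have "(\<lambda>d. c1 d + c2 d) = cw p m u (a + a') (b + b')" using F.cw_add by simp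
    then show "(\<lambda>d. c1 d + c2 d) \<in> C" using Cmem by blast
  qed
  have P3: "\<forall>c\<in>C. \<forall>k::nat. (\<lambda>d. of_nat k * c d) \<in> C"
  proof (intro ballI allI)
    fix c and k :: nat assume "c \<in> C"
    then obtain a b where "c = cw p m u a b" using Cmem by blast
    then have "(\<lambda>d. of_nat k * c d) = cw p m u (of_nat k * a) (of_nat k * b)" using F.cw_smul by simp
    then show "(\<lambda>d. of_nat k * c d) \<in> C" using Cmem by blast
  qed
  have P4: "card (D1 p m u :: ('a \<times> 'a) set) = p ^ (2*m - 1) - 1" by (rule F.card_D1)
  have P5: "card C = p ^ (2*m)" unfolding C_def by (rule F.card_code)
  have P6: "card {hw p m u c | c. c \<in> C \<and> c \<noteq> (\<lambda>_. 0)} = 3" unfolding C_def by (rule F.three_weights)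
  have P7: "card {c \<in> C. hw p m u c = 0} = 1"
    unfolding C_def using F.count_code[of "\<lambda>n. n = 0"] F.count_W0 by simp
  have P8: "card {c \<in> C. real (hw p m u c) = (real p - 1) * real p ^ (2*m - 2)}
         = p ^ (2*m) - 1 - (p - 1) * p ^ m"
    unfolding C_def using F.count_code[of "\<lambda>n. real n = F.RW1"] F.count_W1 by (simp add: F.RW1_def)
  have P9: "real (card {c \<in> C. real (hw p m u c) = (real p - 1) * real p ^ (2*m - 2) * (1 + 1 / real p ^ s)})
         = (real p - 1) * (real p ^ (m - 1) - real p ^ s + real p ^ (s - 1))"
  proof -
    have "card {c \<in> C. real (hw p m u c) = (real p - 1) * real p ^ (2*m - 2) * (1 + 1 / real p ^ s)}
        = card {(a, b). real (F.wt a b) = F.RW2}"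
      unfolding C_def sF using F.count_code[of "\<lambda>n. real n = F.RW2"] by (simp add: F.RW2_def)
    then have "real (card {c \<in> C. real (hw p m u c) = (real p - 1) * real p ^ (2*m - 2) * (1 + 1 / real p ^ s)})
        = (real p - 1) * (F.Zr - (real p - 1) * F.Sr)" using F.count_W2 by simp
    also have "\<dots> = (real p - 1) * (real p ^ (m - 1) - real p ^ s + real p ^ (s - 1))"
      unfolding sF F.ps_eq by (simp add: F.Zr_def F.Sr_def algebra_simps)
    finally show ?thesis .
  qed
  have P10: "real (card {c \<in> C. real (hw p m u c)
                     = (real p - 1) * real p ^ (2*m - 2) * (1 - 1 / ((real p - 1) * real p ^ s))})
         = (real p - 1) * (real p ^ s + 1) * (real p ^ s - real p ^ (s - 1))"
  proof -
    have "card {c \<in> C. real (hw p m u c) = (real p - 1) * real p ^ (2*m - 2) * (1 - 1 / ((real p - 1) * real p ^ s))}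
        = card {(a, b). real (F.wt a b) = F.RW3}"
      unfolding C_def sF using F.count_code[of "\<lambda>n. real n = F.RW3"] by (simp add: F.RW3_def)
    then have "real (card {c \<in> C. real (hw p m u c) = (real p - 1) * real p ^ (2*m - 2) * (1 - 1 / ((real p - 1) * real p ^ s))})
        = (real p - 1) * (real p * F.Zr - F.Zr + (real p - 1) * F.Sr)" using F.count_W3 by simp
    also have "\<dots> = (real p - 1) * (real p ^ s + 1) * (real p ^ s - real p ^ (s - 1))"
      unfolding sF F.ps_eq F.Zr_eq F.Sr_def[symmetric] by (simp add: power2_eq_square algebra_simps)
    finally show ?thesis .
  qed
  show ?thesis using P1 P2 P3 P4 P5 P6 P7 P8 P9 P10 by blast
qed

end
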